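(* Let $k,l\geq 1$ and let $S_{k,l}$ be the double star, and let $p(x)=x(x-k-1)(x-l-1)-(x-1)(x-k-1)-(x-1)(x-l-1)$. (1) Let $v$ be the vertex of $S_{k,l}$ of degree $k+1$. Then $\uparrow^{2}S_{k,l}$ has Laplacian pretty good state transfer between $(0,v)$ and $(1,v)$ if and only if $p(x)$ is irreducible over $\mathbb{Q}$ and $\nu_2(k+1)=\nu_2(l+3)$. (2) Let $w$ be a leaf of $S_{k,l}$ attached to the vertex of degree $l+1$. Then $\uparrow^{2}S_{k,l}$ has Laplacian pretty good state transfer between $(0,w)$ and $(1,w)$ if and only if $l=1$, $k$ is odd, and either $p(x)$ is irreducible over $\mathbb{Q}$ or $p(x)$ has a root that is an even integer.
   Context: The double star $S_{k,l}$ is the tree obtained from $K_2$ (with vertices $x,y$) by attaching $k$ pendent vertices to $x$ and $l$ pendent vertices to $y$; its Laplacian characteristic polynomial is $x(x-1)^{k+l-2}p(x)$. For a nonzero integer $n$, $\nu_2(n)$ is the exponent of the largest power of $2$ dividing $n$. The blow-up $\uparrow^{2}G$ has vertex set $\mathbb{Z}_2\times V(G)$, with $(a,u)\sim(b,v)$ iff $u\sim v$ in $G$. A graph with Laplacian $L=D-A$ has Laplacian pretty good state transfer between vertices $a,b$ if there exist $\{t_k\}\subseteq\mathbb{R}$ and $\gamma\in\mathbb{C}$ with $\lim_{k\to\infty}\exp(it_kL)\mathbf{e}_a=\gamma\mathbf{e}_b$. *)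

theory Defs
  imports Complex_Main "HOL-Computational_Algebra.Polynomial" "HOL-Computational_Algebra.Factorial_Ring"
begin

text \<open>A finite simple graph: a finite vertex set V and a symmetric, irreflexive
adjacency relation adj (only its restriction to V matters).
Matrices indexed by V are functions 'a => 'a => complex.\<close>

definition degree :: "'a set \<Rightarrow> ('a \<Rightarrow> 'a \<Rightarrow> bool) \<Rightarrow> 'a \<Rightarrow> nat" where
  "degree V adj u = card {w \<in> V. adj u w}"

definition laplacian :: "'a set \<Rightarrow> ('a \<Rightarrow> 'a \<Rightarrow> bool) \<Rightarrow> 'a \<Rightarrow> 'a \<Rightarrow> complex" where
  "laplacian V adj u v =
     (if u = v then of_nat (degree V adj u) else 0) - (if adj u v then 1 else 0)"

fun mat_pow :: "'a set \<Rightarrow> ('a \<Rightarrow> 'a \<Rightarrow> complex) \<Rightarrow> nat \<Rightarrow> 'a \<Rightarrow> 'a \<Rightarrow> complex" where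
  "mat_pow V M 0 u v = (if u = v then 1 else 0)"
| "mat_pow V M (Suc n) u v = (\<Sum>w\<in>V. M u w * mat_pow V M n w v)"

definition mat_exp :: "'a set \<Rightarrow> ('a \<Rightarrow> 'a \<Rightarrow> complex) \<Rightarrow> 'a \<Rightarrow> 'a \<Rightarrow> complex" where
  "mat_exp V M u v = (\<Sum>n. mat_pow V M n u v / of_nat (fact n))"

definition laplacian_pgst :: "'a set \<Rightarrow> ('a \<Rightarrow> 'a \<Rightarrow> bool) \<Rightarrow> 'a \<Rightarrow> 'a \<Rightarrow> bool" where
  "laplacian_pgst V adj a b \<longleftrightarrow>
     (\<exists>(t :: nat \<Rightarrow> real) (\<gamma> :: complex). \<forall>u\<in>V.
        (\<lambda>j. mat_exp V (\<lambda>x y. \<i> * of_real (t j) * laplacian V adj x y) u a)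
          \<longlonglongrightarrow> (if u = b then \<gamma> else 0))"

text \<open>Double star S_{k,l} on vertices {0..k+l+1}: x = 0, y = 1,
  leaves 2..k+1 attached to x, leaves k+2..k+l+1 attached to y.\<close>
definition dstar_V :: "nat \<Rightarrow> nat \<Rightarrow> nat set" where
  "dstar_V k l = {0..k+l+1}"

definition dstar_edge :: "nat \<Rightarrow> nat \<Rightarrow> nat \<Rightarrow> nat \<Rightarrow> bool" where
  "dstar_edge k l u v \<longleftrightarrow>
     (u = 0 \<and> v = 1) \<or> (u = 0 \<and> 2 \<le> v \<and> v \<le> k + 1) \<or> (u = 1 \<and> k + 2 \<le> v \<and> v \<le> k + l + 1)"

definition dstar_adj :: "nat \<Rightarrow> nat \<Rightarrow> nat \<Rightarrow> nat \<Rightarrow> bool" where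
  "dstar_adj k l u v \<longleftrightarrow> dstar_edge k l u v \<or> dstar_edge k l v u"

text \<open>Blow-up: vertex set Z_2 x V(G) (Z_2 represented as {0,1}),
  (a,u) ~ (b,v) iff u ~ v in G.\<close>
definition blowup2_V :: "'a set \<Rightarrow> (nat \<times> 'a) set" where
  "blowup2_V V = {0, 1} \<times> V"

definition blowup2_adj :: "('a \<Rightarrow> 'a \<Rightarrow> bool) \<Rightarrow> nat \<times> 'a \<Rightarrow> nat \<times> 'a \<Rightarrow> bool" where
  "blowup2_adj adj p q \<longleftrightarrow> adj (snd p) (snd q)"

definition dstar_p :: "nat \<Rightarrow> nat \<Rightarrow> rat poly" where
  "dstar_p k l =
     [:0, 1:] * [:- of_nat (k+1), 1:] * [:- of_nat (l+1), 1:]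
     - [:-1, 1:] * [:- of_nat (k+1), 1:] - [:-1, 1:] * [:- of_nat (l+1), 1:]"

end

theory Submission
  imports Defs "HOL-Analysis.Kronecker_Approximation_Theorem"
begin

lemma mat_pow_bound:
  assumes "finite V" "\<And>u w. u \<in> V \<Longrightarrow> w \<in> V \<Longrightarrow> norm (M u w) \<le> B" "B \<ge> 0" "u \<in> V"
  shows "norm (mat_pow V M n u v) \<le> (real (card V) * B) ^ n"
  using assms(4)
proof (induction n arbitrary: u)
  case 0
  then show ?case by simp
next
  case (Suc n)
  have "norm (mat_pow V M (Suc n) u v) \<le> (\<Sum>w\<in>V. norm (M u w * mat_pow V M n w v))"
    by (simp add: norm_sum)
  also have "\<dots> \<le> (\<Sum>w\<in>V. B * (real (card V) * B) ^ n)"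
  proof (rule sum_mono)
    fix w assume w: "w \<in> V"
    show "norm (M u w * mat_pow V M n w v) \<le> B * (real (card V) * B) ^ n"
      unfolding norm_mult
      by (rule mult_mono) (use assms Suc w in auto)
  qed
  also have "\<dots> = (real (card V) * B) ^ Suc n" by simp
  finally show ?case .
qed

lemma mat_pow_summable:
  assumes "finite V" "u \<in> V"
  shows "summable (\<lambda>n. mat_pow V M n u v / of_nat (fact n))"
proof -
  define B where "B = Max ((\<lambda>(u,w). norm (M u w)) ` (V \<times> V)) + 0"
  have B: "norm (M u w) \<le> max B 0" if "u \<in> V" "w \<in> V" for u w
  proof -
    have "norm (M u w) \<le> B" unfolding B_def using assms that
      by (auto intro!: Max_ge)
    then show ?thesis by simp
  qed
  have "summable (\<lambda>n. (real (card V) * max B 0) ^ n / fact n)"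
    using summable_exp_generic[of "real (card V) * max B 0"] by (simp add: divide_inverse mult.commute)
  show ?thesis
  proof (rule summable_comparison_test'[OF \<open>summable _\<close>])
    fix n :: nat
    have "norm (mat_pow V M n u v / of_nat (fact n)) = norm (mat_pow V M n u v) / fact n"
      by (simp add: norm_divide)
    also have "\<dots> \<le> (real (card V) * max B 0) ^ n / fact n"
      by (rule divide_right_mono) (use mat_pow_bound[OF assms(1) B _ assms(2)] in auto)
    finally show "norm (mat_pow V M n u v / of_nat (fact n)) \<le> (real (card V) * max B 0) ^ n / fact n" .
  qed
qed

lemma exp_sums_fact: "(\<lambda>n. (z::complex) ^ n / of_nat (fact n)) sums exp z"
  using exp_converges[of z] by (simp add: scaleR_conv_of_real divide_inverse mult.commute)

lemma mat_pow_expand: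
  assumes "finite J"
    and init: "\<And>u. u \<in> V \<Longrightarrow> (if u = a then 1 else 0) = (\<Sum>j\<in>J. c j * \<phi> j u)"
    and eig: "\<And>j u. j \<in> J \<Longrightarrow> u \<in> V \<Longrightarrow> (\<Sum>w\<in>V. M u w * \<phi> j w) = \<mu> j * \<phi> j u"
    and "u \<in> V"
  shows "mat_pow V M n u a = (\<Sum>j\<in>J. c j * \<mu> j ^ n * \<phi> j u)"
  using \<open>u \<in> V\<close>
proof (induction n arbitrary: u)
  case 0
  then show ?case using init by simp
next
  case (Suc n)
  have "mat_pow V M (Suc n) u a = (\<Sum>w\<in>V. M u w * (\<Sum>j\<in>J. c j * \<mu> j ^ n * \<phi> j w))"
    using Suc by simp
  also have "\<dots> = (\<Sum>j\<in>J. c j * \<mu> j ^ n * (\<Sum>w\<in>V. M u w * \<phi> j w))"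
    by (simp add: sum_distrib_left sum_distrib_right mult_ac sum.swap[of _ V])
  also have "\<dots> = (\<Sum>j\<in>J. c j * \<mu> j ^ Suc n * \<phi> j u)"
    using eig Suc by (simp add: mult_ac)
  finally show ?case .
qed

lemma mat_exp_expand:
  assumes "finite J"
    and init: "\<And>u. u \<in> V \<Longrightarrow> (if u = a then 1 else 0) = (\<Sum>j\<in>J. c j * \<phi> j u)"
    and eig: "\<And>j u. j \<in> J \<Longrightarrow> u \<in> V \<Longrightarrow> (\<Sum>w\<in>V. M u w * \<phi> j w) = \<mu> j * \<phi> j u"
    and "u \<in> V"
  shows "mat_exp V M u a = (\<Sum>j\<in>J. c j * exp (\<mu> j) * \<phi> j u)"
proof -
  have "(\<lambda>n. mat_pow V M n u a / of_nat (fact n)) = (\<lambda>n. \<Sum>j\<in>J. c j * \<phi> j u * (\<mu> j ^ n / of_nat (fact n)))"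
    using mat_pow_expand[OF assms] by (simp add: sum_divide_distrib mult_ac)
  moreover have "(\<lambda>n. \<Sum>j\<in>J. c j * \<phi> j u * (\<mu> j ^ n / of_nat (fact n))) sums (\<Sum>j\<in>J. c j * \<phi> j u * exp (\<mu> j))"
    by (intro sums_sum sums_mult exp_sums_fact)
  ultimately show ?thesis unfolding mat_exp_def by (simp add: sums_iff mult_ac)
qed

lemma mat_pow_inner:
  assumes "finite V" "a \<in> V"
    and sym: "\<And>u w. u \<in> V \<Longrightarrow> w \<in> V \<Longrightarrow> M u w = M w u"
    and eig: "\<And>u. u \<in> V \<Longrightarrow> (\<Sum>w\<in>V. M u w * \<phi> w) = \<mu> * \<phi> u"
  shows "(\<Sum>u\<in>V. mat_pow V M n u a * \<phi> u) = \<mu> ^ n * \<phi> a"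
proof (induction n)
  case 0
  have "(\<Sum>u\<in>V. (if u = a then 1 else 0) * \<phi> u) = (\<Sum>u\<in>V. if u = a then \<phi> u else 0)"
    by (rule sum.cong) auto
  then show ?case using assms by simp
next
  case (Suc n)
  have "(\<Sum>u\<in>V. mat_pow V M (Suc n) u a * \<phi> u) = (\<Sum>u\<in>V. \<Sum>w\<in>V. M u w * mat_pow V M n w a * \<phi> u)"
    by (simp add: sum_distrib_right)
  also have "\<dots> = (\<Sum>w\<in>V. mat_pow V M n w a * (\<Sum>u\<in>V. M w u * \<phi> u))"
    by (subst sum.swap) (auto simp: sum_distrib_left mult_ac sym intro!: sum.cong)
  also have "\<dots> = (\<Sum>w\<in>V. mat_pow V M n w a * (\<mu> * \<phi> w))"
    using eig by simp
  also have "\<dots> = \<mu> * (\<Sum>w\<in>V. mat_pow V M n w a * \<phi> w)"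
    by (simp add: sum_distrib_left mult_ac)
  finally show ?case using Suc by simp
qed

lemma mat_exp_inner:
  assumes "finite V" "a \<in> V"
    and sym: "\<And>u w. u \<in> V \<Longrightarrow> w \<in> V \<Longrightarrow> M u w = M w u"
    and eig: "\<And>u. u \<in> V \<Longrightarrow> (\<Sum>w\<in>V. M u w * \<phi> w) = \<mu> * \<phi> u"
  shows "(\<Sum>u\<in>V. mat_exp V M u a * \<phi> u) = exp \<mu> * \<phi> a"
proof -
  have "(\<lambda>n. \<Sum>u\<in>V. mat_pow V M n u a / of_nat (fact n) * \<phi> u) sums (\<Sum>u\<in>V. mat_exp V M u a * \<phi> u)"
    unfolding mat_exp_def
    by (intro sums_sum sums_mult2 summable_sums mat_pow_summable[OF assms(1)])
  moreover have "(\<lambda>n. \<Sum>u\<in>V. mat_pow V M n u a / of_nat (fact n) * \<phi> u) = (\<lambda>n. \<phi> a * (\<mu> ^ n / of_nat (fact n)))"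
  proof
    fix n
    have "(\<Sum>u\<in>V. mat_pow V M n u a / of_nat (fact n) * \<phi> u) = (\<Sum>u\<in>V. mat_pow V M n u a * \<phi> u) / of_nat (fact n)"
      by (simp add: sum_divide_distrib)
    also have "\<dots> = \<phi> a * (\<mu> ^ n / of_nat (fact n))"
      using mat_pow_inner[OF assms] by simp
    finally show "(\<Sum>u\<in>V. mat_pow V M n u a / of_nat (fact n) * \<phi> u) = \<phi> a * (\<mu> ^ n / of_nat (fact n))" .
  qed
  moreover have "(\<lambda>n. \<phi> a * (\<mu> ^ n / of_nat (fact n))) sums (\<phi> a * exp \<mu>)"
    by (intro sums_mult exp_sums_fact)
  ultimately show ?thesis by (simp add: sums_iff mult_ac)
qed

definition Lop :: "'a set \<Rightarrow> ('a \<Rightarrow> 'a \<Rightarrow> bool) \<Rightarrow> ('a \<Rightarrow> complex) \<Rightarrow> 'a \<Rightarrow> complex" where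
  "Lop V adj h u = (\<Sum>w\<in>V. laplacian V adj u w * h w)"

lemma blowup_degree:
  assumes "finite V"
  shows "degree (blowup2_V V) (blowup2_adj adj) (b, x) = 2 * degree V adj x"
proof -
  have "{w \<in> blowup2_V V. blowup2_adj adj (b, x) w} = {0,1::nat} \<times> {y \<in> V. adj x y}"
    by (auto simp: blowup2_V_def blowup2_adj_def)
  then show ?thesis using assms by (simp add: degree_def card_cartesian_product)
qed

lemma sum_blowup:
  assumes "finite V"
  shows "(\<Sum>w\<in>blowup2_V V. f w) = (\<Sum>y\<in>V. \<Sum>b'\<in>{0,1::nat}. f (b', y))"
  unfolding blowup2_V_def sum.cartesian_product' using assms by (simp add: sum.swap[of _ V])

lemma blowup_lap_sum2:
  assumes "finite V" "b \<in> {0,1}"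
  shows "(\<Sum>b'\<in>{0,1::nat}. laplacian (blowup2_V V) (blowup2_adj adj) (b, x) (b', y))
       = 2 * laplacian V adj x y"
  using assms by (auto simp: laplacian_def blowup_degree blowup2_adj_def)

lemma blowup_lap_anti:
  assumes "finite V" "b \<in> {0,1}"
  shows "(\<Sum>b'\<in>{0,1::nat}. laplacian (blowup2_V V) (blowup2_adj adj) (b, x) (b', y) * (if b' = 0 then 1 else -1))
       = (if x = y then 2 * of_nat (degree V adj x) * (if b = 0 then 1 else -1) else 0)"
  using assms by (auto simp: laplacian_def blowup_degree blowup2_adj_def)

lemma blowup_sym_eig:
  assumes "finite V" "(b, x) \<in> blowup2_V V"
  shows "(\<Sum>w\<in>blowup2_V V. laplacian (blowup2_V V) (blowup2_adj adj) (b, x) w * h (snd w))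
       = 2 * Lop V adj h x"
proof -
  have bb: "b \<in> {0,1}" using assms by (auto simp: blowup2_V_def)
  have "(\<Sum>w\<in>blowup2_V V. laplacian (blowup2_V V) (blowup2_adj adj) (b, x) w * h (snd w))
      = (\<Sum>y\<in>V. \<Sum>b'\<in>{0,1::nat}. laplacian (blowup2_V V) (blowup2_adj adj) (b, x) (b', y) * h y)"
    unfolding sum_blowup[OF assms(1)] by simp
  also have "\<dots> = (\<Sum>y\<in>V. 2 * laplacian V adj x y * h y)"
    by (rule sum.cong[OF refl]) (simp only: sum_distrib_right[symmetric] blowup_lap_sum2[OF assms(1) bb])
  also have "\<dots> = 2 * Lop V adj h x"
    by (simp add: Lop_def sum_distrib_left mult_ac)
  finally show ?thesis .
qed

lemma blowup_anti_eig:
  assumes "finite V" "(b, x) \<in> blowup2_V V" "v \<in> V"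
  shows "(\<Sum>w\<in>blowup2_V V. laplacian (blowup2_V V) (blowup2_adj adj) (b, x) w *
            (if snd w = v then (if fst w = 0 then 1 else -1) else 0))
       = 2 * of_nat (degree V adj v) * (if (b, x) \<in> {0,1} \<times> {v} then (if b = 0 then 1 else -1) else 0)"
proof -
  have bb: "b \<in> {0,1}" and xV: "x \<in> V" using assms by (auto simp: blowup2_V_def)
  have "(\<Sum>w\<in>blowup2_V V. laplacian (blowup2_V V) (blowup2_adj adj) (b, x) w *
            (if snd w = v then (if fst w = 0 then 1 else -1) else 0))
      = (\<Sum>y\<in>V. \<Sum>b'\<in>{0,1::nat}. laplacian (blowup2_V V) (blowup2_adj adj) (b, x) (b', y) * (if b' = 0 then 1 else -1) * (if y = v then 1 else 0))"
    unfolding sum_blowup[OF assms(1)] by (auto intro!: sum.cong)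
  also have "\<dots> = (\<Sum>y\<in>V. (if x = y then 2 * of_nat (degree V adj x) * (if b = 0 then 1 else -1) else 0) * (if y = v then 1 else 0))"
    by (rule sum.cong[OF refl]) (simp only: sum_distrib_right[symmetric] blowup_lap_anti[OF assms(1) bb])
  also have "\<dots> = 2 * of_nat (degree V adj v) * (if (b, x) \<in> {0,1} \<times> {v} then (if b = 0 then 1 else -1) else 0)"
    using xV bb assms(1) by (auto simp: if_distrib sum.delta cong: if_cong)
  finally show ?thesis .
qed

lemma blowup_lap_sym:
  assumes "\<And>x y. adj x y = adj y x"
  shows "laplacian (blowup2_V V) (blowup2_adj adj) u w = laplacian (blowup2_V V) (blowup2_adj adj) w u"
  using assms by (auto simp: laplacian_def blowup2_adj_def)

lemma dstar_adj_sym: "dstar_adj k l x y = dstar_adj k l y x"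
  by (auto simp: dstar_adj_def)

lemma finite_dstar_V: "finite (dstar_V k l)"
  by (simp add: dstar_V_def)

lemma dstar_nbrs:
  assumes "u \<in> dstar_V k l"
  shows "{y \<in> dstar_V k l. dstar_adj k l u y} =
     (if u = 0 then {1..k+1} else if u = 1 then insert 0 {k+2..k+l+1} else if u \<le> k+1 then {0} else {1})"
  using assms by (auto simp: dstar_V_def dstar_adj_def dstar_edge_def)

definition cv :: "nat \<Rightarrow> nat \<Rightarrow> complex \<Rightarrow> complex \<Rightarrow> complex \<Rightarrow> complex \<Rightarrow> complex \<Rightarrow> nat \<Rightarrow> complex" where
  "cv k w A B C D E u = (if u = 0 then A else if u = 1 then B else if u \<le> k+1 then C else if u = w then D else E)"

lemma Lop_alt:
  assumes "finite V" "u \<in> V"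
  shows "Lop V adj h u = of_nat (degree V adj u) * h u - (\<Sum>y\<in>{y\<in>V. adj u y}. h y)"
proof -
  have "Lop V adj h u = (\<Sum>w\<in>V. (if u = w then of_nat (degree V adj u) * h w else 0)) - (\<Sum>w\<in>V. if adj u w then h w else 0)"
    unfolding Lop_def laplacian_def sum_subtractf[symmetric] by (rule sum.cong) (auto simp: algebra_simps)
  also have "\<dots> = of_nat (degree V adj u) * h u - (\<Sum>y\<in>{y\<in>V. adj u y}. h y)"
    using assms by (simp add: sum.inter_filter sum.delta)
  finally show ?thesis .
qed

lemma dstar_degree:
  assumes "u \<in> dstar_V k l"
  shows "degree (dstar_V k l) (dstar_adj k l) u = (if u = 0 then k+1 else if u = 1 then l+1 else 1)"
  using assms unfolding degree_def dstar_nbrs[OF assms] by (auto simp: dstar_V_def)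

lemma sum_cv_leafx: "(\<Sum>y\<in>{2..k+1}. cv k w A B C D E y) = of_nat k * C"
  by (simp add: cv_def)

lemma sum_cv_leafy:
  assumes "k + 2 \<le> w" "w \<le> k + l + 1"
  shows "(\<Sum>y\<in>{k+2..k+l+1}. cv k w A B C D E y) = D + of_nat (l - 1) * E"
proof -
  have "(\<Sum>y\<in>{k+2..k+l+1}. cv k w A B C D E y) = (\<Sum>y\<in>{k+2..k+l+1}. if y = w then D else E)"
    by (rule sum.cong) (auto simp: cv_def)
  also have "\<dots> = D + (\<Sum>y\<in>{k+2..k+l+1} - {w}. if y = w then D else E)"
    using assms by (subst sum.remove[of _ w]) auto
  also have "\<dots> = D + (\<Sum>y\<in>{k+2..k+l+1} - {w}. E)"
    by (intro arg_cong2[where f="(+)"] refl sum.cong) auto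
  also have "\<dots> = D + of_nat (card ({k+2..k+l+1} - {w})) * E"
    by simp
  also have "card ({k+2..k+l+1} - {w}) = l - 1"
    using assms by (subst card_Diff_singleton) auto
  finally show ?thesis .
qed

lemma Lop_cv:
  assumes "u \<in> dstar_V k l" "k + 2 \<le> w" "w \<le> k + l + 1"
  shows "Lop (dstar_V k l) (dstar_adj k l) (cv k w A B C D E) u =
    cv k w ((of_nat k + 1) * A - B - of_nat k * C)
           ((of_nat l + 1) * B - A - D - of_nat (l - 1) * E)
           (C - A) (D - B) (E - B) u"
proof -
  have fin: "finite (dstar_V k l)" by (simp add: finite_dstar_V)
  have s1: "(\<Sum>y\<in>{1..k+1}. cv k w A B C D E y) = B + of_nat k * C"
  proof -
    have "{1..k+1} = insert 1 {2..k+1}" by auto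
    then show ?thesis using sum_cv_leafx[of k w A B C D E] by (simp add: cv_def)
  qed
  have s2: "(\<Sum>y\<in>insert 0 {k+2..k+l+1}. cv k w A B C D E y) = A + D + of_nat (l - 1) * E"
    using sum_cv_leafy[OF assms(2,3), of A B C D E] by (simp add: cv_def)
  show ?thesis
    unfolding Lop_alt[OF fin assms(1)] dstar_nbrs[OF assms(1)] dstar_degree[OF assms(1)]
    using s1 s2 assms by (auto simp: cv_def algebra_simps)
qed

abbreviation "DV k l \<equiv> dstar_V k l"
abbreviation "DA k l \<equiv> dstar_adj k l"
abbreviation "BV k l \<equiv> blowup2_V (dstar_V k l)"
abbreviation "BA k l \<equiv> blowup2_adj (dstar_adj k l)"
abbreviation "BL k l \<equiv> laplacian (BV k l) (BA k l)"

definition antiv :: "nat \<Rightarrow> nat \<times> nat \<Rightarrow> complex" where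
  "antiv v w = (if snd w = v then (if fst w = 0 then 1 else -1) else 0)"

lemma finite_BV: "finite (BV k l)"
  by (simp add: blowup2_V_def finite_dstar_V)

lemma BL_scaled_sum:
  "(\<Sum>w\<in>BV k l. c * BL k l u w * \<phi> w) = c * (\<Sum>w\<in>BV k l. BL k l u w * \<phi> w)"
  by (simp add: sum_distrib_left mult_ac)

lemma sym_eig_M:
  assumes "u \<in> BV k l" "\<And>x. x \<in> DV k l \<Longrightarrow> Lop (DV k l) (DA k l) h x = of_real \<theta> * h x"
  shows "(\<Sum>w\<in>BV k l. \<i> * of_real t * BL k l u w * h (snd w)) = (\<i> * of_real (2 * t * \<theta>)) * h (snd u)"
proof -
  obtain b x where u: "u = (b, x)" by force
  have x: "x \<in> DV k l" using assms(1) u by (auto simp: blowup2_V_def)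
  show ?thesis
    unfolding BL_scaled_sum u using blowup_sym_eig[OF finite_dstar_V assms(1)[unfolded u], where h=h and adj="DA k l"] assms(2)[OF x]
    by simp
qed

lemma anti_eig_M:
  assumes "u \<in> BV k l" "v \<in> DV k l"
  shows "(\<Sum>w\<in>BV k l. \<i> * of_real t * BL k l u w * antiv v w)
      = (\<i> * of_real (2 * t * real (degree (DV k l) (DA k l) v))) * antiv v u"
proof -
  obtain b x where u: "u = (b, x)" by force
  have b: "b \<in> {0,1}" using assms(1) u by (auto simp: blowup2_V_def)
  show ?thesis
    unfolding BL_scaled_sum u antiv_def using blowup_anti_eig[OF finite_dstar_V assms(1)[unfolded u] assms(2), of "DA k l"] b
    by auto
qed

lemma BL_sym: "BL k l u w = BL k l w u"
  by (rule blowup_lap_sym) (rule dstar_adj_sym)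

lemma Lop_const:
  assumes "x \<in> DV k l"
  shows "Lop (DV k l) (DA k l) (\<lambda>_. 1) x = of_real 0 * 1"
  using Lop_alt[OF finite_dstar_V assms, of "DA k l" "\<lambda>_. 1"] by (simp add: degree_def)

lemma pgst_onlyif:
  assumes pg: "laplacian_pgst (BV k l) (BA k l) (0, v) (1, v)" and v: "v \<in> DV k l"
  shows "\<exists>s :: nat \<Rightarrow> real.
     (\<lambda>j. exp (\<i> * of_real (s j * real (degree (DV k l) (DA k l) v)))) \<longlonglongrightarrow> -1 \<and>
     (\<forall>h \<theta>. (\<forall>x\<in>DV k l. Lop (DV k l) (DA k l) h x = of_real \<theta> * h x) \<and> h v \<noteq> 0 \<longrightarrow>
          (\<lambda>j. exp (\<i> * of_real (s j * \<theta>))) \<longlonglongrightarrow> 1)"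
proof -
  obtain t :: "nat \<Rightarrow> real" and \<gamma> where lim: "\<And>u. u \<in> BV k l \<Longrightarrow>
     (\<lambda>j. mat_exp (BV k l) (\<lambda>x y. \<i> * of_real (t j) * BL k l x y) u (0, v)) \<longlonglongrightarrow> (if u = (1, v) then \<gamma> else 0)"
    using pg unfolding laplacian_pgst_def by blast
  have a: "(0, v) \<in> BV k l" and b: "(1, v) \<in> BV k l" using v by (auto simp: blowup2_V_def)
  have key: "(\<lambda>j. exp (\<mu> j) * \<phi> (0, v)) \<longlonglongrightarrow> \<gamma> * \<phi> (1, v)"
    if eig: "\<And>j u. u \<in> BV k l \<Longrightarrow> (\<Sum>w\<in>BV k l. \<i> * of_real (t j) * BL k l u w * \<phi> w) = \<mu> j * \<phi> u" for \<phi> \<mu>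
  proof -
    have "(\<lambda>j. \<Sum>u\<in>BV k l. mat_exp (BV k l) (\<lambda>x y. \<i> * of_real (t j) * BL k l x y) u (0, v) * \<phi> u)
          \<longlonglongrightarrow> (\<Sum>u\<in>BV k l. (if u = (1, v) then \<gamma> else 0) * \<phi> u)"
      by (intro tendsto_sum tendsto_mult_right lim)
    also have "(\<Sum>u\<in>BV k l. (if u = (1, v) then \<gamma> else 0) * \<phi> u) = (\<Sum>u\<in>BV k l. if u = (1, v) then \<gamma> * \<phi> u else 0)"
      by (rule sum.cong) auto
    also have "\<dots> = \<gamma> * \<phi> (1, v)" using b finite_BV by simp
    also have "(\<lambda>j. \<Sum>u\<in>BV k l. mat_exp (BV k l) (\<lambda>x y. \<i> * of_real (t j) * BL k l x y) u (0, v) * \<phi> u)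
             = (\<lambda>j. exp (\<mu> j) * \<phi> (0, v))"
    proof
      fix j
      show "(\<Sum>u\<in>BV k l. mat_exp (BV k l) (\<lambda>x y. \<i> * of_real (t j) * BL k l x y) u (0, v) * \<phi> u) = exp (\<mu> j) * \<phi> (0, v)"
        by (rule mat_exp_inner[OF finite_BV a]) (auto simp: BL_sym eig)
    qed
    finally show ?thesis .
  qed
  define s where "s j = 2 * t j" for j
  have g1: "\<gamma> = 1"
  proof -
    have "(\<lambda>j. exp (\<i> * of_real (2 * t j * 0)) * 1) \<longlonglongrightarrow> \<gamma> * 1"
      using key[of "\<lambda>w. 1" "\<lambda>j. \<i> * of_real (2 * t j * 0)"]
        sym_eig_M[of _ k l "\<lambda>_. 1" 0] Lop_const by force
    then have "(\<lambda>j. 1) \<longlonglongrightarrow> \<gamma>" by simp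
    then show ?thesis using LIMSEQ_unique tendsto_const by blast
  qed
  have A: "(\<lambda>j. exp (\<i> * of_real (s j * real (degree (DV k l) (DA k l) v)))) \<longlonglongrightarrow> -1"
  proof -
    have "(\<lambda>j. exp (\<i> * of_real (2 * t j * real (degree (DV k l) (DA k l) v))) * antiv v (0, v)) \<longlonglongrightarrow> \<gamma> * antiv v (1, v)"
      by (rule key) (rule anti_eig_M[OF _ v])
    then show ?thesis using g1 by (simp add: antiv_def s_def)
  qed
  have B: "(\<lambda>j. exp (\<i> * of_real (s j * \<theta>))) \<longlonglongrightarrow> 1"
    if h: "\<forall>x\<in>DV k l. Lop (DV k l) (DA k l) h x = of_real \<theta> * h x" "h v \<noteq> 0" for h \<theta>
  proof -
    have "(\<lambda>j. exp (\<i> * of_real (2 * t j * \<theta>)) * h v) \<longlonglongrightarrow> \<gamma> * h v"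
      using key[of "\<lambda>w. h (snd w)" "\<lambda>j. \<i> * of_real (2 * t j * \<theta>)"] sym_eig_M[of _ k l h \<theta>] h(1) by force
    then have "(\<lambda>j. exp (\<i> * of_real (2 * t j * \<theta>)) * h v * (1 / h v)) \<longlonglongrightarrow> \<gamma> * h v * (1 / h v)"
      by (rule tendsto_mult_right)
    moreover have "(\<lambda>j. exp (\<i> * of_real (2 * t j * \<theta>)) * h v * (1 / h v)) = (\<lambda>j. exp (\<i> * of_real (s j * \<theta>)))"
      using h(2) by (simp add: s_def)
    moreover have "\<gamma> * h v * (1 / h v) = 1" using h(2) g1 by simp
    ultimately show ?thesis by simp
  qed
  show ?thesis using A B by blast
qed

lemma pgst_if:
  fixes J :: "'j set" and h :: "'j \<Rightarrow> nat \<Rightarrow> complex" and \<theta> :: "'j \<Rightarrow> real" and s :: "nat \<Rightarrow> real"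
  assumes v: "v \<in> DV k l" and finJ: "finite J"
    and eig: "\<And>j x. j \<in> J \<Longrightarrow> x \<in> DV k l \<Longrightarrow> Lop (DV k l) (DA k l) (h j) x = of_real (\<theta> j) * h j x"
    and exps: "\<And>x. x \<in> DV k l \<Longrightarrow> (if x = v then 1 else 0) = (\<Sum>j\<in>J. h j x)"
    and lims: "\<And>j. j \<in> J \<Longrightarrow> (\<lambda>n. exp (\<i> * of_real (s n * \<theta> j))) \<longlonglongrightarrow> 1"
    and limd: "(\<lambda>n. exp (\<i> * of_real (s n * real (degree (DV k l) (DA k l) v)))) \<longlonglongrightarrow> -1"
  shows "laplacian_pgst (BV k l) (BA k l) (0, v) (1, v)"
proof -
  define t where "t n = s n / 2" for n
  define K where "K = insert None (Some ` J)"
  define \<phi> where "\<phi> j' w = (case j' of None \<Rightarrow> antiv v w | Some j \<Rightarrow> h j (snd w))" for j' w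
  define \<mu> where "\<mu> n j' = (case j' of None \<Rightarrow> \<i> * of_real (2 * t n * real (degree (DV k l) (DA k l) v))
                                 | Some j \<Rightarrow> \<i> * of_real (2 * t n * \<theta> j))" for n j'
  define c :: "'j option \<Rightarrow> complex" where "c j' = 1/2" for j'
  define lv :: "'j option \<Rightarrow> complex" where "lv j' = (case j' of None \<Rightarrow> -1 | Some j \<Rightarrow> (1::complex))" for j'
  have finK: "finite K" using finJ by (simp add: K_def)
  have sumK: "(\<Sum>j'\<in>K. f j') = f None + (\<Sum>j\<in>J. f (Some j))" for f :: "'j option \<Rightarrow> complex"
    unfolding K_def using finJ by (subst sum.insert) (auto simp: sum.reindex)
  have col: "mat_exp (BV k l) (\<lambda>x y. \<i> * of_real (t n) * BL k l x y) u (0, v) = (\<Sum>j'\<in>K. c j' * exp (\<mu> n j') * \<phi> j' u)"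
    if u: "u \<in> BV k l" for u n
  proof (rule mat_exp_expand[OF finK _ _ u])
    fix u assume u: "u \<in> BV k l"
    obtain b x where ux: "u = (b, x)" by force
    have b: "b \<in> {0,1}" and x: "x \<in> DV k l" using u ux by (auto simp: blowup2_V_def)
    show "(if u = (0, v) then 1 else 0) = (\<Sum>j'\<in>K. c j' * \<phi> j' u)"
      unfolding sumK using exps[OF x] b
      by (auto simp: ux c_def \<phi>_def antiv_def sum_divide_distrib[symmetric])
  next
    fix j' u assume j': "j' \<in> K" and u: "u \<in> BV k l"
    show "(\<Sum>w\<in>BV k l. \<i> * of_real (t n) * BL k l u w * \<phi> j' w) = \<mu> n j' * \<phi> j' u"
    proof (cases j')
      case None
      then show ?thesis using anti_eig_M[OF u v] by (simp add: \<phi>_def \<mu>_def)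
    next
      case (Some j)
      then have "j \<in> J" using j' by (auto simp: K_def)
      then show ?thesis using sym_eig_M[OF u, of "h j" "\<theta> j" "t n"] eig Some by (simp add: \<phi>_def \<mu>_def)
    qed
  qed
  have limk: "(\<lambda>n. exp (\<mu> n j')) \<longlonglongrightarrow> lv j'" if "j' \<in> K" for j'
  proof (cases j')
    case None
    then show ?thesis using limd by (simp add: \<mu>_def lv_def t_def)
  next
    case (Some j)
    then have "j \<in> J" using that by (auto simp: K_def)
    then show ?thesis using lims Some by (simp add: \<mu>_def lv_def t_def)
  qed
  show ?thesis
    unfolding laplacian_pgst_def
  proof (intro exI ballI)
    fix u assume u: "u \<in> BV k l"
    obtain b x where ux: "u = (b, x)" by force
    have b: "b \<in> {0,1}" and x: "x \<in> DV k l" using u ux by (auto simp: blowup2_V_def)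
    have "(\<lambda>n. \<Sum>j'\<in>K. c j' * exp (\<mu> n j') * \<phi> j' u) \<longlonglongrightarrow> (\<Sum>j'\<in>K. c j' * lv j' * \<phi> j' u)"
      by (intro tendsto_sum tendsto_mult_right tendsto_mult_left limk)
    also have "(\<Sum>j'\<in>K. c j' * lv j' * \<phi> j' u) = (if u = (1, v) then 1 else 0)"
      unfolding sumK using exps[OF x] b
      by (auto simp: ux c_def \<phi>_def antiv_def lv_def sum_divide_distrib[symmetric])
    finally show "(\<lambda>n. mat_exp (BV k l) (\<lambda>x y. \<i> * of_real (t n) * BL k l x y) u (0, v)) \<longlonglongrightarrow> (if u = (1, v) then 1 else 0)"
      using col[OF u] by simp
  qed
qed

definition pg :: "nat \<Rightarrow> nat \<Rightarrow> 'a::comm_ring_1 \<Rightarrow> 'a" where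
  "pg k l x = x^3 - of_nat (k+l+4) * x^2 + of_nat (k*l+2*k+2*l+5) * x - of_nat (k+l+2)"

lemma pg_alt: "pg k l x = x * (x - of_nat k - 1) * (x - of_nat l - 1) - (x - 1) * (x - of_nat k - 1) - (x - 1) * (x - of_nat l - 1)"
  unfolding pg_def by (simp add: algebra_simps power2_eq_square power3_eq_cube)

lemma poly_dstar_p: "poly (dstar_p k l) x = pg k l x"
  unfolding dstar_p_def pg_alt by (simp add: algebra_simps)

lemma dstar_p_coeffs: "dstar_p k l = [:- of_nat (k+l+2), of_nat (k*l+2*k+2*l+5), - of_nat (k+l+4), 1:]"
proof -
  have "poly (dstar_p k l) = poly [:- of_nat (k+l+2), of_nat (k*l+2*k+2*l+5), - of_nat (k+l+4), 1:]"
    by (rule ext) (simp add: poly_dstar_p pg_def algebra_simps power2_eq_square power3_eq_cube)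
  then show ?thesis by (simp add: poly_eq_poly_eq_iff)
qed

lemma degree_dstar_p: "Polynomial.degree (dstar_p k l) = 3"
  by (simp add: dstar_p_coeffs)

lemma of_rat_pg: "of_rat (pg k l q) = pg k l (of_rat q :: 'a::field_char_0)"
  by (simp add: pg_def of_rat_add of_rat_diff of_rat_mult of_rat_power)

lemma irr_no_root:
  assumes "irreducible (dstar_p k l)"
  shows "pg k l (q::rat) \<noteq> 0"
proof
  assume "pg k l q = 0"
  then have "[:-q, 1:] dvd dstar_p k l" by (simp add: poly_eq_0_iff_dvd[symmetric] poly_dstar_p)
  then obtain r where r: "dstar_p k l = [:-q, 1:] * r" by (elim dvdE)
  have "r \<noteq> 0" using r degree_dstar_p[of k l] by auto
  have "Polynomial.degree ([:-q, 1:] * r) = Polynomial.degree [:-q, 1:] + Polynomial.degree r"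
    using \<open>r \<noteq> 0\<close> by (intro degree_mult_eq) auto
  then have "Polynomial.degree r = 2" using r degree_dstar_p[of k l] by simp
  from irreducibleD[OF assms r] have "is_unit [:-q, 1:] \<or> is_unit r" .
  then show False using \<open>Polynomial.degree r = 2\<close> \<open>r \<noteq> 0\<close> by (auto simp: is_unit_iff_degree)
qed

lemma not_irr_root:
  assumes "\<not> irreducible (dstar_p k l)"
  shows "\<exists>q::rat. pg k l q = 0"
proof -
  have nz: "dstar_p k l \<noteq> 0" using degree_dstar_p[of k l] by auto
  have nu: "\<not> is_unit (dstar_p k l)" using degree_dstar_p[of k l] nz by (simp add: is_unit_iff_degree)
  obtain a b where ab: "dstar_p k l = a * b" "\<not> is_unit a" "\<not> is_unit b"
    using assms nz nu unfolding irreducible_def by blast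
  have a0: "a \<noteq> 0" and b0: "b \<noteq> 0" using ab nz by auto
  have da: "Polynomial.degree a \<noteq> 0" and db: "Polynomial.degree b \<noteq> 0" using ab a0 b0 by (auto simp: is_unit_iff_degree)
  have "Polynomial.degree a + Polynomial.degree b = 3" using ab a0 b0 degree_dstar_p[of k l] by (simp add: degree_mult_eq)
  then have "Polynomial.degree a = 1 \<or> Polynomial.degree b = 1" using da db by arith
  then obtain c where c: "c dvd dstar_p k l" "Polynomial.degree c = 1"
    using ab by (metis dvd_triv_left dvd_triv_right)
  then obtain x y where xy: "c = [:y, x:]" "x \<noteq> 0" by (elim degree1_coeffs)
  have "poly c (- y / x) = 0" using xy by simp
  then have "poly (dstar_p k l) (- y / x) = 0" using c(1) by (auto elim!: dvdE)
  then show ?thesis by (auto simp: poly_dstar_p)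
qed

lemma rat_root_int:
  assumes "pg k l (q::rat) = 0"
  shows "\<exists>m::int. q = of_int m"
proof -
  obtain a b where qab: "quotient_of q = (a, b)" by force
  have b0: "b > 0" using quotient_of_denom_pos[OF qab] .
  have cop: "coprime a b" using quotient_of_coprime[OF qab] .
  have q: "q = of_int a / of_int b" using quotient_of_div[OF qab] .
  define S where "S = int (k+l+4)"
  define P where "P = int (k*l+2*k+2*l+5)"
  define R where "R = int (k+l+2)"
  have "of_int b ^ 3 * pg k l q = (of_int (a^3 - S * a^2 * b + P * a * b^2 - R * b^3) :: rat)"
    using b0 unfolding q pg_def S_def P_def R_def
    by (simp add: field_simps power2_eq_square power3_eq_cube)
  then have "(of_int (a^3 - S * a^2 * b + P * a * b^2 - R * b^3) :: rat) = 0"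
    using assms by (metis mult_zero_right)
  then have eq: "a^3 - S * a^2 * b + P * a * b^2 - R * b^3 = 0"
    by (simp only: of_int_eq_0_iff)
  then have "a^3 = b * (S * a^2 - P * a * b + R * b^2)"
    by (simp add: algebra_simps power2_eq_square power3_eq_cube)
  then have "b dvd a^3" by simp
  moreover have "coprime b (a^3)" using cop by (simp add: coprime_commute)
  ultimately have "is_unit b" using coprime_common_divisor[of b "a^3" b] by auto
  then have "b = 1" using b0 by simp
  then show ?thesis using q by auto
qed

lemma int_root_eq:
  assumes "pg k l (of_int r :: rat) = 0" "k \<ge> 1" "l \<ge> 1"
  shows "k = l"
proof -
  define a where "a = r - int k - 1"
  define b where "b = r - int l - 1"
  have "(of_int (r * a * b - (r - 1) * (a + b)) :: rat) = pg k l (of_int r)"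
    unfolding pg_alt a_def b_def by (simp add: algebra_simps)
  then have "(of_int (r * a * b - (r - 1) * (a + b)) :: rat) = 0" using assms(1) by simp
  then have "r * a * b - (r - 1) * (a + b) = 0" by (simp only: of_int_eq_0_iff)
  then have eq: "r * a * b = (r - 1) * (a + b)" by simp
  have ak: "a \<le> r - 2" "b \<le> r - 2" using assms unfolding a_def b_def by auto
  show ?thesis
  proof (rule ccontr)
    assume "k \<noteq> l"
    then have ab: "a \<noteq> b" unfolding a_def b_def by auto
    consider "r \<le> 0" | "r = 1" | "r \<ge> 2" by linarith
    then show False
    proof cases
      case 1
      then have "a < 0" "b < 0" using ak by auto
      then have "a * b > 0" by (simp add: mult_neg_neg)
      then have "r * (a * b) \<le> 0" using 1 by (simp add: mult_nonpos_nonneg)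
      moreover have "(r - 1) * (a + b) > 0" using 1 \<open>a < 0\<close> \<open>b < 0\<close> by (simp add: mult_neg_neg)
      ultimately show False using eq by (simp add: mult.assoc)
    next
      case 2
      then have "a * b = 0" using eq by simp
      then show False using 2 assms unfolding a_def b_def by auto
    next
      case 3
      note r2 = this
      consider "a = 0" | "b = 0" | "a \<ge> 1" "b \<ge> 1" | "a \<ge> 1" "b \<le> -1" | "a \<le> -1" "b \<ge> 1" | "a \<le> -1" "b \<le> -1"
        by linarith
      then show False
      proof cases
        case 1
        then show False using eq r2 ab by simp
      next
        case 2
        then show False using eq r2 ab by simp
      next
        case 4
        have e1: "a * (r * b - (r - 1)) = (r - 1) * b" using eq by (simp add: algebra_simps)
        have "r * b \<le> r * (-1)" using r2 4 by (intro mult_left_mono) auto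
        then have X: "r * b - (r - 1) < 0" using r2 by linarith
        have "a * (r * b - (r - 1)) \<le> 1 * (r * b - (r - 1))"
          using 4 X by (intro mult_right_mono_neg) auto
        moreover have "r * b - (r - 1) < (r - 1) * b" using r2 4 ak by (simp add: algebra_simps)
        ultimately show False using e1 unfolding mult.left_neutral by linarith
      next
        case 5
        have e1: "b * (r * a - (r - 1)) = (r - 1) * a" using eq by (simp add: algebra_simps)
        have "r * a \<le> r * (-1)" using r2 5 by (intro mult_left_mono) auto
        then have X: "r * a - (r - 1) < 0" using r2 by linarith
        have "b * (r * a - (r - 1)) \<le> 1 * (r * a - (r - 1))"
          using 5 X by (intro mult_right_mono_neg) auto
        moreover have "r * a - (r - 1) < (r - 1) * a" using r2 5 ak by (simp add: algebra_simps)
        ultimately show False using e1 unfolding mult.left_neutral by linarith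
      next
        case 6
        then have "a * b > 0" by (simp add: mult_neg_neg)
        then have "r * (a * b) > 0" using r2 by simp
        moreover have "(r - 1) * (a + b) < 0" using r2 6 by (simp add: mult_pos_neg)
        ultimately show False using eq by (simp add: mult.assoc)
      next
        case 3
        show False
        proof (cases "a = 1 \<or> b = 1")
          case True
          then show False
          proof
            assume a1: "a = 1"
            then have "r * b = (r - 1) * (1 + b)" using eq by simp
            then have "b = r - 1" by (simp add: algebra_simps)
            then show False using ak by simp
          next
            assume b1: "b = 1"
            then have "r * a = (r - 1) * (a + 1)" using eq by simp
            then have "a = r - 1" by (simp add: algebra_simps)
            then show False using ak by simp
          qed
        next
          case False
          then have "a \<ge> 2" "b \<ge> 2" using 3 by auto
          have "(a - 1) * (b - 1) \<ge> 1 * 1"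
            using \<open>a \<ge> 2\<close> \<open>b \<ge> 2\<close> by (intro mult_mono) auto
          then have "a * b \<ge> a + b" by (simp add: algebra_simps)
          then have "r * (a * b) \<ge> r * (a + b)" using r2 by (simp add: mult_left_mono)
          moreover have "r * (a + b) > (r - 1) * (a + b)" using \<open>a \<ge> 2\<close> \<open>b \<ge> 2\<close> by (simp add: algebra_simps)
          ultimately show False using eq by (simp add: mult.assoc)
        qed
      qed
    qed
  qed
qed

lemma irr_iff:
  assumes "k \<ge> 1" "l \<ge> 1"
  shows "irreducible (dstar_p k l) \<longleftrightarrow> k \<noteq> l"
proof
  assume irr: "irreducible (dstar_p k l)"
  show "k \<noteq> l"
  proof
    assume "k = l"
    then have "pg k l (of_nat (k+1) :: rat) = 0" by (simp add: pg_alt)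
    then show False using irr_no_root[OF irr] by blast
  qed
next
  assume "k \<noteq> l"
  show "irreducible (dstar_p k l)"
  proof (rule ccontr)
    assume "\<not> irreducible (dstar_p k l)"
    then obtain q where "pg k l (q::rat) = 0" using not_irr_root by blast
    moreover obtain m where "q = of_int m" using rat_root_int[OF \<open>pg k l q = 0\<close>] by blast
    ultimately show False using int_root_eq[of k l m] assms \<open>k \<noteq> l\<close> by simp
  qed
qed

lemma isCont_pg: "isCont (pg k l :: real \<Rightarrow> real) x"
  unfolding pg_def by (intro continuous_intros)

lemma root_between:
  fixes f :: "real \<Rightarrow> real"
  assumes "a < b" "\<And>x. isCont f x" "(f a < 0 \<and> f b > 0) \<or> (f a > 0 \<and> f b < 0)"
  shows "\<exists>x. a < x \<and> x < b \<and> f x = 0"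
  using assms(3)
proof
  assume h: "f a < 0 \<and> f b > 0"
  obtain x where "a \<le> x" "x \<le> b" "f x = 0" using IVT[of f a 0 b] h assms(1,2) by force
  then show ?thesis using h by (intro exI[of _ x]) (auto simp: order.order_iff_strict)
next
  assume h: "f a > 0 \<and> f b < 0"
  obtain x where "a \<le> x" "x \<le> b" "f x = 0" using IVT2[of f b 0 a] h assms(1,2) by force
  then show ?thesis using h by (intro exI[of _ x]) (auto simp: order.order_iff_strict)
qed

lemma pg_0: "pg k l (0::real) = - real (k+l+2)"
  by (simp add: pg_def)

lemma pg_1: "pg k l (1::real) = real (k*l)"
  by (simp add: pg_def algebra_simps)

lemma pg_k1: "pg k l (real k + 1) = - real k * (real k - real l)"
  by (simp add: pg_alt algebra_simps)

lemma pg_l1: "pg k l (real l + 1) = - real l * (real l - real k)"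
  by (simp add: pg_alt algebra_simps)

lemma pg_big: "pg k l (real (k+l+4)) = real (18 + 12*l + 2*l^2 + 12*k + 8*k*l + k*l^2 + 2*k^2 + k^2*l)"
  by (simp add: pg_def algebra_simps power2_eq_square power3_eq_cube)

lemma pg_kk: "pg k k (x::real) = (x - real k - 1) * (x^2 - (real k + 3) * x + 2)"
  by (simp add: pg_def algebra_simps power2_eq_square power3_eq_cube)

lemma pg_roots:
  assumes "k \<ge> 1" "l \<ge> 1"
  shows "\<exists>a b c :: real. a < b \<and> b < c \<and> pg k l a = 0 \<and> pg k l b = 0 \<and> pg k l c = 0"
proof (cases "k = l")
  case True
  define g :: "real \<Rightarrow> real" where "g x = x^2 - (real k + 3) * x + 2" for x
  have cg: "isCont g x" for x unfolding g_def by (intro continuous_intros)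
  have "g 0 > 0" "g 1 < 0" "g (real k + 1) < 0" "g (real k + 3) > 0"
    using assms by (auto simp: g_def power2_eq_square algebra_simps)
  then obtain a c where a: "0 < a" "a < 1" "g a = 0" and c: "real k + 1 < c" "c < real k + 3" "g c = 0"
    using root_between[of 0 1 g] root_between[of "real k + 1" "real k + 3" g] cg by force
  show ?thesis
    using a c assms True
    by (intro exI[of _ a] exI[of _ "real k + 1"] exI[of _ c]) (auto simp: pg_kk g_def)
next
  case False
  have c: "\<And>x. isCont (pg k l :: real \<Rightarrow> real) x" by (rule isCont_pg)
  have p0: "pg k l (0::real) < 0" by (simp add: pg_0)
  have p1: "pg k l (1::real) > 0" using assms by (simp add: pg_1)
  have pB: "pg k l (real (k+l+4)) > 0" by (simp only: pg_big)
  obtain m where m: "1 < m" "m < real (k+l+4)" "pg k l m < 0"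
  proof (cases "k < l")
    case True
    then show ?thesis using that[of "real l + 1"] assms by (simp add: pg_l1)
  next
    case False
    then have "l < k" using \<open>k \<noteq> l\<close> by simp
    then show ?thesis using that[of "real k + 1"] assms by (simp add: pg_k1)
  qed
  have "\<exists>x::real. 0 < x \<and> x < 1 \<and> pg k l x = 0" using root_between[of 0 1 "pg k l"] isCont_pg p0 p1 by auto
  then obtain a :: real where a: "0 < a" "a < 1" "pg k l a = 0" by blast
  have "\<exists>x::real. 1 < x \<and> x < m \<and> pg k l x = 0" using root_between[of 1 m "pg k l"] isCont_pg p1 m by auto
  then obtain b :: real where b: "1 < b" "b < m" "pg k l b = 0" by blast
  have "\<exists>x::real. m < x \<and> x < real (k+l+4) \<and> pg k l x = 0" using root_between[of m "real (k+l+4)" "pg k l"] isCont_pg pB m by auto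
  then obtain d :: real where d: "m < d" "d < real (k+l+4)" "pg k l d = 0" by blast
  show ?thesis using a b d by (intro exI[of _ a] exI[of _ b] exI[of _ d]) auto
qed

lemma vieta:
  fixes a b c :: real
  assumes "pg k l a = 0" "pg k l b = 0" "pg k l c = 0" "a \<noteq> b" "a \<noteq> c" "b \<noteq> c"
  shows "a + b + c = real (k+l+4)" "a*b + a*c + b*c = real (k*l+2*k+2*l+5)" "a*b*c = real (k+l+2)"
proof -
  define S where "S = real (k+l+4)"
  define P where "P = real (k*l+2*k+2*l+5)"
  define R where "R = real (k+l+2)"
  have pg: "pg k l x = x^3 - S * x^2 + P * x - R" for x :: real
    by (simp add: pg_def S_def P_def R_def)
  have d: "pg k l x - pg k l y = (x - y) * (x^2 + x*y + y^2 - S*(x+y) + P)" for x y :: real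
    unfolding pg by (simp add: algebra_simps power2_eq_square power3_eq_cube)
  have qab: "a^2 + a*b + b^2 - S*(a+b) + P = 0" using d[of a b] assms by simp
  have qac: "a^2 + a*c + c^2 - S*(a+c) + P = 0" using d[of a c] assms by simp
  have "(b - c) * (a + b + c - S) = 0"
    using qab qac by (simp add: algebra_simps power2_eq_square)
  then have s: "a + b + c = S" using assms by simp
  then have e2: "a*b + a*c + b*c = P"
  proof -
    have c: "c = S - a - b" using s by simp
    have qq: "P = - (a^2 + a*b + b^2 - S*(a+b))" using qab by linarith
    have "a*b + a*c + b*c = a*b + (a+b)*(S - a - b)" unfolding c by (simp add: algebra_simps)
    also have "\<dots> = - (a^2 + a*b + b^2 - S*(a+b))" by (simp add: algebra_simps power2_eq_square)
    finally show ?thesis using qq by simp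
  qed
  have "a^3 - S * a^2 + P * a - R = 0" using assms(1) pg by simp
  then have "a * (a^2 - S * a + P) = R" by (simp add: algebra_simps power2_eq_square power3_eq_cube)
  moreover have "a^2 - S * a + P = b * c"
    unfolding s[symmetric] e2[symmetric] by (simp add: algebra_simps power2_eq_square)
  ultimately have "a*b*c = R" by (simp add: mult.assoc)
  then show "a + b + c = real (k+l+4)" "a*b + a*c + b*c = real (k*l+2*k+2*l+5)" "a*b*c = real (k+l+2)"
    using s e2 by (simp_all add: S_def P_def R_def)
qed

lemma norat:
  assumes "\<And>q::rat. pg k l q \<noteq> 0" "x \<in> \<rat>"
  shows "pg k l (x::real) \<noteq> 0"
proof -
  obtain q where "x = of_rat q" using assms(2) by (auto elim: Rats_cases)
  then show ?thesis using assms(1)[of q] of_rat_pg[of k l q, where 'a=real] by auto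
qed

lemma quad_rel:
  fixes \<theta> A B C :: real
  assumes nr: "\<And>x. x \<in> \<rat> \<Longrightarrow> pg k l x \<noteq> (0::real)" and th: "pg k l \<theta> = 0"
    and Q: "A \<in> \<rat>" "B \<in> \<rat>" "C \<in> \<rat>" and rel: "A * \<theta>^2 + B * \<theta> + C = 0"
  shows "A = 0 \<and> B = 0 \<and> C = 0"
proof -
  have tnq: "\<theta> \<notin> \<rat>" using nr th by blast
  define S where "S = real (k+l+4)"
  define P where "P = real (k*l+2*k+2*l+5)"
  define R where "R = real (k+l+2)"
  have SPR: "S \<in> \<rat>" "P \<in> \<rat>" "R \<in> \<rat>" by (simp_all add: S_def P_def R_def)
  have pg: "pg k l x = x^3 - S * x^2 + P * x - R" for x :: real
    by (simp add: pg_def S_def P_def R_def)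
  show ?thesis
  proof (cases "A = 0")
    case True
    then have r: "B * \<theta> + C = 0" using rel by simp
    show ?thesis
    proof (cases "B = 0")
      case True
      then show ?thesis using r \<open>A = 0\<close> by simp
    next
      case False
      then have "\<theta> = - C / B" using r by (simp add: field_simps add_eq_0_iff)
      then have "\<theta> \<in> \<rat>" using Q by simp
      then show ?thesis using tnq by simp
    qed
  next
    case False
    define u where "u = - B / A"
    define v where "v = - C / A"
    have uv: "u \<in> \<rat>" "v \<in> \<rat>" using Q by (simp_all add: u_def v_def)
    have sq: "\<theta>^2 = u * \<theta> + v" using rel False unfolding u_def v_def
      by (simp add: field_simps add_eq_0_iff)
    define c1 where "c1 = u^2 + v - S * u + P"
    define c0 where "c0 = u * v - S * v - R"
    have cq: "c1 \<in> \<rat>" "c0 \<in> \<rat>" using uv SPR by (simp_all add: c1_def c0_def)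
    have id: "pg k l x = (x^2 - u * x - v) * (x - (S - u)) + c1 * x + c0" for x
      unfolding pg c1_def c0_def by (simp add: algebra_simps power2_eq_square power3_eq_cube)
    have "pg k l \<theta> = c1 * \<theta> + c0" unfolding id sq by simp
    then have lin: "c1 * \<theta> + c0 = 0" using th by simp
    have c1z: "c1 = 0"
    proof (rule ccontr)
      assume "c1 \<noteq> 0"
      then have "\<theta> = - c0 / c1" using lin by (simp add: field_simps add_eq_0_iff)
      then have "\<theta> \<in> \<rat>" using cq by simp
      then show False using tnq by simp
    qed
    then have "c0 = 0" using lin by simp
    then have "pg k l (S - u) = 0" unfolding id using c1z by simp
    moreover have "S - u \<in> \<rat>" using SPR uv by simp
    ultimately show ?thesis using nr by blast
  qed
qed

lemma SP_ineq: "real (k+l+4) ^ 2 \<noteq> 3 * real (k*l+2*k+2*l+5)"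
proof -
  have "real (k+l+4) ^ 2 - 3 * real (k*l+2*k+2*l+5) = (real k - real l)^2 + real k * real l + 2 * real k + 2 * real l + 1"
    by (simp add: power2_eq_square algebra_simps)
  moreover have "(real k - real l)^2 + real k * real l + 2 * real k + 2 * real l + 1 > 0"
    by (intro add_pos_nonneg add_nonneg_pos) auto
  ultimately show ?thesis by linarith
qed

lemma indep_rel:
  fixes a b c x y z w :: real
  assumes nr: "\<And>x. x \<in> \<rat> \<Longrightarrow> pg k l x \<noteq> (0::real)"
    and r: "pg k l a = 0" "pg k l b = 0" "pg k l c = 0" and d: "a \<noteq> b" "a \<noteq> c" "b \<noteq> c"
    and Q: "x \<in> \<rat>" "y \<in> \<rat>" "z \<in> \<rat>" "w \<in> \<rat>"
    and rel: "x * a + y * b + z * c = w"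
  shows "x = z \<and> y = z"
proof -
  define S where "S = real (k+l+4)"
  define P where "P = real (k*l+2*k+2*l+5)"
  define R where "R = real (k+l+2)"
  have SPR: "S \<in> \<rat>" "P \<in> \<rat>" "R \<in> \<rat>" by (simp_all add: S_def P_def R_def)
  have pg: "pg k l t = t^3 - S * t^2 + P * t - R" for t :: real
    by (simp add: pg_def S_def P_def R_def)
  have sum: "a + b + c = S" using vieta(1)[OF r d] by (simp add: S_def)
  define \<alpha> where "\<alpha> = x - z"
  define \<beta> where "\<beta> = y - z"
  define q where "q = w - z * S"
  have abq: "\<alpha> \<in> \<rat>" "\<beta> \<in> \<rat>" "q \<in> \<rat>" using Q SPR by (simp_all add: \<alpha>_def \<beta>_def q_def)
  have rel2: "\<alpha> * a + \<beta> * b = q"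
  proof -
    have zs: "z * a + z * b + z * c = z * S" using sum by (metis distrib_left)
    show ?thesis using rel zs unfolding \<alpha>_def \<beta>_def q_def by (simp add: algebra_simps; linarith)
  qed
  have anq: "a \<notin> \<rat>" "b \<notin> \<rat>" "c \<notin> \<rat>" using nr r by blast+
  have "\<alpha> = 0 \<and> \<beta> = 0"
  proof (cases "\<beta> = 0")
    case True
    then have "\<alpha> * a = q" using rel2 by simp
    show ?thesis
    proof (rule ccontr)
      assume "\<not> (\<alpha> = 0 \<and> \<beta> = 0)"
      then have "\<alpha> \<noteq> 0" using True by simp
      then have "a = q / \<alpha>" using \<open>\<alpha> * a = q\<close> by (simp add: field_simps)
      then show False using anq abq by simp
    qed
  next
    case False
    show ?thesis
    proof (cases "\<alpha> = 0")
      case True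
      then have "b = q / \<beta>" using rel2 False by (simp add: field_simps)
      then show ?thesis using anq abq by simp
    next
      case aF: False
      define m where "m = - \<alpha> / \<beta>"
      define b0 where "b0 = q / \<beta>"
      have mb: "m \<in> \<rat>" "b0 \<in> \<rat>" using abq by (simp_all add: m_def b0_def)
      have m0: "m \<noteq> 0" using aF False by (simp add: m_def)
      have bm: "b = m * a + b0" using rel2 False unfolding m_def b0_def by (simp add: field_simps)
      define A where "A = 3 * m^2 * b0 - S * m^2 + S * m^3"
      define B where "B = 3 * m * b0^2 - 2 * S * m * b0 + P * m - P * m^3"
      define C where "C = b0^3 - S * b0^2 + P * b0 - R + R * m^3"
      have "pg k l (m * a + b0) - m^3 * pg k l a = A * a^2 + B * a + C"
        unfolding pg A_def B_def C_def by (simp add: algebra_simps power2_eq_square power3_eq_cube)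
      then have "A * a^2 + B * a + C = 0" using r bm by simp
      moreover have "A \<in> \<rat>" "B \<in> \<rat>" "C \<in> \<rat>" using mb SPR by (simp_all add: A_def B_def C_def)
      ultimately have ABC: "A = 0" "B = 0" "C = 0" using quad_rel[OF nr r(1)] by blast+
      have e1: "3 * b0 = S * (1 - m)"
      proof -
        have "m^2 * (3 * b0 - S * (1 - m)) = A" unfolding A_def by (simp add: algebra_simps power2_eq_square power3_eq_cube)
        then show ?thesis using ABC m0 by simp
      qed
      have e2: "3 * b0^2 - 2 * S * b0 + P * (1 - m^2) = 0"
      proof -
        have "m * (3 * b0^2 - 2 * S * b0 + P * (1 - m^2)) = B" unfolding B_def by (simp add: algebra_simps power2_eq_square power3_eq_cube)
        then show ?thesis using ABC m0 by simp
      qed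
      have "3 * (1 - m) * (1 + m) * (3 * P - S^2) = 9 * (3 * b0^2 - 2 * S * b0 + P * (1 - m^2))"
      proof -
        have "9 * (3 * b0^2 - 2 * S * b0 + P * (1 - m^2)) = 3 * (3 * b0)^2 - 6 * S * (3 * b0) + 9 * P * (1 - m^2)"
          by (simp add: algebra_simps power2_eq_square)
        also have "\<dots> = 3 * (S * (1 - m))^2 - 6 * S * (S * (1 - m)) + 9 * P * (1 - m^2)" unfolding e1 ..
        also have "\<dots> = 3 * (1 - m) * (1 + m) * (3 * P - S^2)" by (simp add: algebra_simps power2_eq_square)
        finally show ?thesis ..
      qed
      then have "(1 - m) * (1 + m) * (3 * P - S^2) = 0" using e2 by simp
      moreover have "3 * P - S^2 \<noteq> 0" using SP_ineq[of k l] by (simp add: S_def P_def)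
      ultimately have "m = 1 \<or> m = -1" by auto
      then show ?thesis
      proof
        assume "m = 1"
        then have "b0 = 0" using e1 by simp
        then have "b = a" using bm \<open>m = 1\<close> by simp
        then show ?thesis using d by simp
      next
        assume "m = -1"
        then have "b0 = 2 * S / 3" using e1 by simp
        then have "c = S / 3" using sum bm \<open>m = -1\<close> by simp
        then have "c \<in> \<rat>" using SPR by (simp only: Rats_divide Rats_number_of)
        then show ?thesis using anq by simp
      qed
    qed
  qed
  then show ?thesis by (simp add: \<alpha>_def \<beta>_def)
qed

lemma lag_gen:
  fixes a b c d xa xb xc xd :: "'a::field"
  assumes "a \<noteq> b" "a \<noteq> c" "a \<noteq> d" "b \<noteq> c" "b \<noteq> d" "c \<noteq> d"
  shows "xa/((a-b)*(a-c)*(a-d)) + xb/((b-a)*(b-c)*(b-d)) + xc/((c-a)*(c-b)*(c-d)) + xd/((d-a)*(d-b)*(d-c))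
       = (xa * ((b-c)*(b-d)*(c-d)) + xb * (-((a-c)*(a-d)*(c-d))) + xc * ((a-b)*(a-d)*(b-d)) + xd * (-((a-b)*(a-c)*(b-c))))
         / ((a-b)*(a-c)*(a-d)*(b-c)*(b-d)*(c-d))"
proof -
  define V where "V = (a-b)*(a-c)*(a-d)*(b-c)*(b-d)*(c-d)"
  have nz: "a - b \<noteq> 0" "a - c \<noteq> 0" "a - d \<noteq> 0" "b - c \<noteq> 0" "b - d \<noteq> 0" "c - d \<noteq> 0"
    using assms by auto
  have fr: "x / D = (x * K) / V" if "D * K = V" "K \<noteq> 0" for x D K
    using that by (metis mult_divide_mult_cancel_right)
  have ka: "xa/((a-b)*(a-c)*(a-d)) = (xa * ((b-c)*(b-d)*(c-d))) / V"
    apply (rule fr) apply (simp add: V_def algebra_simps) using nz by simp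
  have kb: "xb/((b-a)*(b-c)*(b-d)) = (xb * (-((a-c)*(a-d)*(c-d)))) / V"
    apply (rule fr) apply (simp add: V_def algebra_simps) using nz by simp
  have kc: "xc/((c-a)*(c-b)*(c-d)) = (xc * ((a-b)*(a-d)*(b-d))) / V"
    apply (rule fr) apply (simp add: V_def algebra_simps) using nz by simp
  have kd: "xd/((d-a)*(d-b)*(d-c)) = (xd * (-((a-b)*(a-c)*(b-c)))) / V"
    apply (rule fr) apply (simp add: V_def algebra_simps) using nz by simp
  have "xa/((a-b)*(a-c)*(a-d)) + xb/((b-a)*(b-c)*(b-d)) + xc/((c-a)*(c-b)*(c-d)) + xd/((d-a)*(d-b)*(d-c))
     = (xa * ((b-c)*(b-d)*(c-d))) / V + (xb * (-((a-c)*(a-d)*(c-d)))) / V + (xc * ((a-b)*(a-d)*(b-d))) / V + (xd * (-((a-b)*(a-c)*(b-c)))) / V"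
    by (simp only: ka kb kc kd)
  also have "\<dots> = (xa * ((b-c)*(b-d)*(c-d)) + xb * (-((a-c)*(a-d)*(c-d))) + xc * ((a-b)*(a-d)*(b-d)) + xd * (-((a-b)*(a-c)*(b-c)))) / V"
    by (simp only: add_divide_distrib)
  finally show ?thesis by (simp only: V_def)
qed

lemma lag_ids:
  fixes a b c d :: "'a::field"
  assumes "a \<noteq> b" "a \<noteq> c" "a \<noteq> d" "b \<noteq> c" "b \<noteq> d" "c \<noteq> d"
  shows "1/((a-b)*(a-c)*(a-d)) + 1/((b-a)*(b-c)*(b-d)) + 1/((c-a)*(c-b)*(c-d)) + 1/((d-a)*(d-b)*(d-c)) = 0"
    and "(b+c+d)/((a-b)*(a-c)*(a-d)) + (a+c+d)/((b-a)*(b-c)*(b-d)) + (a+b+d)/((c-a)*(c-b)*(c-d)) + (a+b+c)/((d-a)*(d-b)*(d-c)) = 0"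
    and "(b*c+b*d+c*d)/((a-b)*(a-c)*(a-d)) + (a*c+a*d+c*d)/((b-a)*(b-c)*(b-d)) + (a*b+a*d+b*d)/((c-a)*(c-b)*(c-d)) + (a*b+a*c+b*c)/((d-a)*(d-b)*(d-c)) = 0"
    and "(b*c*d)/((a-b)*(a-c)*(a-d)) + (a*c*d)/((b-a)*(b-c)*(b-d)) + (a*b*d)/((c-a)*(c-b)*(c-d)) + (a*b*c)/((d-a)*(d-b)*(d-c)) = -1"
proof -
  have V: "(a-b)*(a-c)*(a-d)*(b-c)*(b-d)*(c-d) \<noteq> 0" using assms by auto
  show "1/((a-b)*(a-c)*(a-d)) + 1/((b-a)*(b-c)*(b-d)) + 1/((c-a)*(c-b)*(c-d)) + 1/((d-a)*(d-b)*(d-c)) = 0"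
    unfolding lag_gen[OF assms] by (simp add: algebra_simps)
  show "(b+c+d)/((a-b)*(a-c)*(a-d)) + (a+c+d)/((b-a)*(b-c)*(b-d)) + (a+b+d)/((c-a)*(c-b)*(c-d)) + (a+b+c)/((d-a)*(d-b)*(d-c)) = 0"
    unfolding lag_gen[OF assms] by (simp add: algebra_simps)
  show "(b*c+b*d+c*d)/((a-b)*(a-c)*(a-d)) + (a*c+a*d+c*d)/((b-a)*(b-c)*(b-d)) + (a*b+a*d+b*d)/((c-a)*(c-b)*(c-d)) + (a*b+a*c+b*c)/((d-a)*(d-b)*(d-c)) = 0"
    unfolding lag_gen[OF assms] by (simp add: algebra_simps)
  have "b*c*d * ((b-c)*(b-d)*(c-d)) + a*c*d * (-((a-c)*(a-d)*(c-d))) + a*b*d * ((a-b)*(a-d)*(b-d)) + a*b*c * (-((a-b)*(a-c)*(b-c)))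
      = - ((a-b)*(a-c)*(a-d)*(b-c)*(b-d)*(c-d))"
    by (simp add: algebra_simps)
  then show "(b*c*d)/((a-b)*(a-c)*(a-d)) + (a*c*d)/((b-a)*(b-c)*(b-d)) + (a*b*d)/((c-a)*(c-b)*(c-d)) + (a*b*c)/((d-a)*(d-b)*(d-c)) = -1"
    unfolding lag_gen[OF assms] using V by simp
qed

definition Qt :: "nat \<Rightarrow> nat \<Rightarrow> (nat \<Rightarrow> complex) \<Rightarrow> nat \<Rightarrow> complex" where
  "Qt k l t i = (if i = 0 then (of_nat k + 1) * t 0 - t 1 - of_nat k * t 2
     else if i = 1 then (of_nat l + 1) * t 1 - t 0 - of_nat l * t 3
     else if i = 2 then t 2 - t 0 else t 3 - t 1)"

definition cidx :: "nat \<Rightarrow> nat \<Rightarrow> nat" where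
  "cidx k u = (if u = 0 then 0 else if u = 1 then 1 else if u \<le> k + 1 then 2 else 3)"

definition cv4 :: "nat \<Rightarrow> (nat \<Rightarrow> complex) \<Rightarrow> nat \<Rightarrow> complex" where
  "cv4 k t u = t (cidx k u)"

lemma cv4_cv: "cv4 k t = cv k w (t 0) (t 1) (t 2) (t 3) (t 3)"
  by (rule ext) (simp add: cv4_def cv_def cidx_def)

lemma Lop_cv4:
  assumes "u \<in> DV k l" "l \<ge> 1"
  shows "Lop (DV k l) (DA k l) (cv4 k t) u = cv4 k (Qt k l t) u"
proof -
  have w: "k + 2 \<le> k + 2" "k + 2 \<le> k + l + 1" using assms by auto
  have l1: "(of_nat (l - Suc 0) :: complex) = of_nat l - 1" using assms by (simp add: of_nat_diff)
  show ?thesis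
    unfolding cv4_cv[where w="k+2"] Lop_cv[OF assms(1) w]
    by (simp add: Qt_def l1 algebra_simps)
qed

lemma Lop_cv4_eig:
  assumes "Qt k l t = (\<lambda>i. \<mu> * t i)" "l \<ge> 1" "u \<in> DV k l"
  shows "Lop (DV k l) (DA k l) (cv4 k t) u = \<mu> * cv4 k t u"
  using Lop_cv4[of u k l t] assms by (simp add: cv4_def)

definition vq :: "nat \<Rightarrow> nat \<Rightarrow> (nat \<Rightarrow> complex) \<Rightarrow> nat \<Rightarrow> nat \<Rightarrow> complex" where
  "vq k l t m = (Qt k l ^^ m) t"

lemma CH:
  "vq k l t 4 i - of_nat (k+l+4) * vq k l t 3 i + of_nat (k*l+2*k+2*l+5) * vq k l t 2 i
     - of_nat (k+l+2) * vq k l t 1 i = 0"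
  unfolding vq_def by (simp add: numeral_eq_Suc Qt_def algebra_simps)

definition lbv :: "nat \<Rightarrow> nat \<Rightarrow> (nat \<Rightarrow> complex) \<Rightarrow> complex \<Rightarrow> complex \<Rightarrow> complex \<Rightarrow> complex \<Rightarrow> nat \<Rightarrow> complex" where
  "lbv k l t y0 y1 y2 y3 i = (vq k l t 3 i - (y1+y2+y3) * vq k l t 2 i + (y1*y2+y1*y3+y2*y3) * vq k l t 1 i
      - y1*y2*y3 * vq k l t 0 i) / ((y0-y1)*(y0-y2)*(y0-y3))"

lemma Qt_lin: "Qt k l (\<lambda>i. (f3 i - c2 * f2 i + c1 * f1 i - c0 * f0 i) / d)
   = (\<lambda>i. (Qt k l f3 i - c2 * Qt k l f2 i + c1 * Qt k l f1 i - c0 * Qt k l f0 i) / d)"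
  by (rule ext) (simp add: Qt_def algebra_simps diff_divide_distrib add_divide_distrib)

lemma vq_Suc: "Qt k l (vq k l t m) = vq k l t (Suc m)"
  by (simp add: vq_def)

lemma lbv_eig:
  assumes "\<And>i. vq k l t 4 i - (y0+y1+y2+y3) * vq k l t 3 i
      + (y0*y1+y0*y2+y0*y3+y1*y2+y1*y3+y2*y3) * vq k l t 2 i
      - (y0*y1*y2+y0*y1*y3+y0*y2*y3+y1*y2*y3) * vq k l t 1 i + y0*y1*y2*y3 * vq k l t 0 i = 0"
  shows "Qt k l (lbv k l t y0 y1 y2 y3) = (\<lambda>i. y0 * lbv k l t y0 y1 y2 y3 i)"
proof (rule ext)
  fix i
  have "Qt k l (lbv k l t y0 y1 y2 y3) i = (vq k l t 4 i - (y1+y2+y3) * vq k l t 3 i + (y1*y2+y1*y3+y2*y3) * vq k l t 2 i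
      - y1*y2*y3 * vq k l t 1 i) / ((y0-y1)*(y0-y2)*(y0-y3))"
    unfolding lbv_def[abs_def] Qt_lin vq_Suc by (simp add: numeral_eq_Suc)
  also have "\<dots> = y0 * lbv k l t y0 y1 y2 y3 i"
  proof -
    have "vq k l t 4 i - (y1+y2+y3) * vq k l t 3 i + (y1*y2+y1*y3+y2*y3) * vq k l t 2 i - y1*y2*y3 * vq k l t 1 i
        = y0 * (vq k l t 3 i - (y1+y2+y3) * vq k l t 2 i + (y1*y2+y1*y3+y2*y3) * vq k l t 1 i - y1*y2*y3 * vq k l t 0 i)"
      using assms[of i] by (simp add: algebra_simps)
    then show ?thesis unfolding lbv_def by (simp add: times_divide_eq_right)
  qed
  finally show "Qt k l (lbv k l t y0 y1 y2 y3) i = y0 * lbv k l t y0 y1 y2 y3 i" .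
qed

lemma lbv_sum:
  assumes "y0 \<noteq> y1" "y0 \<noteq> y2" "y0 \<noteq> y3" "y1 \<noteq> y2" "y1 \<noteq> y3" "y2 \<noteq> y3"
  shows "lbv k l t y0 y1 y2 y3 i + lbv k l t y1 y0 y2 y3 i + lbv k l t y2 y0 y1 y3 i + lbv k l t y3 y0 y1 y2 i = t i"
proof -
  have ex: "(X - e1 * Y + e2 * Z - e3 * W) / d = X * (1/d) - Y * (e1/d) + Z * (e2/d) - W * (e3/d)"
    for X Y Z W e1 e2 e3 d :: complex
    by (simp add: diff_divide_distrib add_divide_distrib mult.commute)
  note L = lag_ids[OF assms]
  define X where "X = vq k l t 3 i"
  define Y where "Y = vq k l t 2 i"
  define Z where "Z = vq k l t 1 i"
  define W where "W = vq k l t 0 i"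
  have W: "W = t i" by (simp add: W_def vq_def)
  have "lbv k l t y0 y1 y2 y3 i + lbv k l t y1 y0 y2 y3 i + lbv k l t y2 y0 y1 y3 i + lbv k l t y3 y0 y1 y2 i
    = X * (1/((y0-y1)*(y0-y2)*(y0-y3)) + 1/((y1-y0)*(y1-y2)*(y1-y3)) + 1/((y2-y0)*(y2-y1)*(y2-y3)) + 1/((y3-y0)*(y3-y1)*(y3-y2)))
    - Y * ((y1+y2+y3)/((y0-y1)*(y0-y2)*(y0-y3)) + (y0+y2+y3)/((y1-y0)*(y1-y2)*(y1-y3)) + (y0+y1+y3)/((y2-y0)*(y2-y1)*(y2-y3)) + (y0+y1+y2)/((y3-y0)*(y3-y1)*(y3-y2)))
    + Z * ((y1*y2+y1*y3+y2*y3)/((y0-y1)*(y0-y2)*(y0-y3)) + (y0*y2+y0*y3+y2*y3)/((y1-y0)*(y1-y2)*(y1-y3)) + (y0*y1+y0*y3+y1*y3)/((y2-y0)*(y2-y1)*(y2-y3)) + (y0*y1+y0*y2+y1*y2)/((y3-y0)*(y3-y1)*(y3-y2)))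
    - W * ((y1*y2*y3)/((y0-y1)*(y0-y2)*(y0-y3)) + (y0*y2*y3)/((y1-y0)*(y1-y2)*(y1-y3)) + (y0*y1*y3)/((y2-y0)*(y2-y1)*(y2-y3)) + (y0*y1*y2)/((y3-y0)*(y3-y1)*(y3-y2)))"
    unfolding lbv_def ex X_def[symmetric] Y_def[symmetric] Z_def[symmetric] W_def[symmetric]
    by (simp add: algebra_simps)
  also have "\<dots> = t i" unfolding L W by simp
  finally show ?thesis .
qed

lemma nu2_neq:
  fixes A B :: nat
  assumes "A > 0" "B > 0" "multiplicity (2::nat) A \<noteq> multiplicity 2 B"
  shows "\<exists>x y :: nat. odd y \<and> x * (A + B) = y * A"
proof -
  obtain A' where A: "A = 2 ^ multiplicity 2 A * A'" "\<not> 2 dvd A'"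
    using multiplicity_decompose'[of A "2::nat"] assms by auto
  obtain B' where B: "B = 2 ^ multiplicity 2 B * B'" "\<not> 2 dvd B'"
    using multiplicity_decompose'[of B "2::nat"] assms by auto
  define a where "a = multiplicity 2 A"
  define b where "b = multiplicity 2 B"
  have A2: "A = 2^a * A'" and B2: "B = 2^b * B'" using A B by (simp_all add: a_def b_def)
  have "a < b \<or> b < a" using assms(3) by (auto simp: a_def b_def)
  then show ?thesis
  proof
    assume ab: "a < b"
    define y where "y = A' + 2^(b-a) * B'"
    have "odd y" using A(2) ab by (simp add: y_def)
    moreover have "A' * (A + B) = y * A"
    proof -
      have "2^b = 2^a * (2::nat)^(b-a)" using ab by (simp add: power_add[symmetric])
      then show ?thesis unfolding A2 B2 y_def by (simp add: algebra_simps)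
    qed
    ultimately show ?thesis by blast
  next
    assume ba: "b < a"
    define y where "y = 2^(a-b) * A' + B'"
    have "odd y" using B(2) ba by (simp add: y_def)
    moreover have "(2^(a-b) * A') * (A + B) = y * A"
    proof -
      have "2^a = 2^b * (2::nat)^(a-b)" using ba by (simp add: power_add[symmetric])
      then show ?thesis unfolding A2 B2 y_def by (simp add: algebra_simps)
    qed
    ultimately show ?thesis by blast
  qed
qed

lemma nu2_eq:
  fixes A B :: nat
  assumes "A > 0" "B > 0" "multiplicity (2::nat) A = multiplicity 2 B"
  shows "\<exists>j z :: int. 2 * int A * j = int (A + B) * (2 * z + 1)"
proof -
  obtain A' where A: "A = 2 ^ multiplicity 2 A * A'" "\<not> 2 dvd A'"
    using multiplicity_decompose'[of A "2::nat"] assms by auto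
  obtain B' where B: "B = 2 ^ multiplicity 2 B * B'" "\<not> 2 dvd B'"
    using multiplicity_decompose'[of B "2::nat"] assms by auto
  define e where "e = multiplicity 2 A"
  have A2: "A = 2^e * A'" and B2: "B = 2^e * B'" using A B assms(3) by (simp_all add: e_def)
  have "even (A' + B')" using A(2) B(2) by simp
  then obtain j where j: "A' + B' = 2 * j" by blast
  obtain z where z: "A' = 2 * z + 1" using A(2) oddE by blast
  have "2 * A * j = 2^e * A' * (2 * j)" unfolding A2 by (simp add: ac_simps)
  also have "\<dots> = 2^e * A' * (A' + B')" using j by simp
  also have "\<dots> = (2^e * A' + 2^e * B') * A'" by (simp add: algebra_simps)
  also have "\<dots> = (A + B) * (2 * z + 1)" unfolding A2 B2 z ..
  finally have "2 * A * j = (A + B) * (2 * z + 1)" .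
  then have "int (2 * A * j) = int ((A + B) * (2 * z + 1))" by simp
  then have "2 * int A * int j = int (A + B) * (2 * int z + 1)" by (simp add: algebra_simps)
  then show ?thesis by blast
qed

lemma exp_shift_int:
  "exp (\<i> * of_real (2 * pi * (of_int m + x))) = exp (\<i> * of_real (2 * pi * x))"
proof -
  have "\<i> * of_real (2 * pi * (of_int m + x)) = \<i> * of_real (2 * pi * x) + \<i> * (of_int m * (of_real pi * 2))"
    by (simp add: algebra_simps)
  then show ?thesis by (simp only: exp_plus_2pin)
qed

lemma exp_half:
  "exp (\<i> * of_real (2 * pi * (1/2 + x))) = - exp (\<i> * of_real (2 * pi * x))"
proof -
  have "\<i> * of_real (2 * pi * (1/2 + x)) = \<i> * of_real (2 * pi * x) + of_real pi * \<i>"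
    by (simp add: algebra_simps)
  then have "exp (\<i> * of_real (2 * pi * (1/2 + x))) = exp (\<i> * of_real (2 * pi * x)) * exp (of_real pi * \<i>)"
    by (simp only: exp_add)
  also have "\<dots> = - exp (\<i> * of_real (2 * pi * x))" by (simp only: exp_pi_i mult_minus1_right)
  finally show ?thesis .
qed

lemma tendsto_exp_small:
  fixes \<delta> :: "nat \<Rightarrow> real"
  assumes "\<And>n. \<bar>\<delta> n\<bar> \<le> C / real (Suc n)"
  shows "(\<lambda>n. exp (\<i> * of_real (2 * pi * \<delta> n))) \<longlonglongrightarrow> 1"
proof -
  have lim: "(\<lambda>n. C * inverse (real (Suc n))) \<longlonglongrightarrow> 0"
    using tendsto_mult[OF tendsto_const LIMSEQ_inverse_real_of_nat, of C] by simp
  have ev: "\<forall>\<^sub>F n in sequentially. norm (\<delta> n) \<le> C * inverse (real (Suc n))"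
    using assms by (intro always_eventually allI) (simp add: divide_inverse)
  have "\<delta> \<longlonglongrightarrow> 0" by (rule Lim_null_comparison[OF ev lim])
  then have "(\<lambda>n. exp (\<i> * of_real (2 * pi * \<delta> n))) \<longlonglongrightarrow> exp (\<i> * of_real (2 * pi * 0))"
    by (intro tendsto_intros)
  then show ?thesis by simp
qed

lemma sqrt2_irrat: "sqrt 2 \<notin> \<rat>"
  proof
  assume "sqrt 2 \<in> \<rat>"
  then obtain a b :: int where ab: "sqrt 2 = of_int a / of_int b" "b > 0" "coprime a b"
    by (meson Rats_cases')
  then have "(of_int a / of_int b) ^ 2 = (2::real)" by (metis real_sqrt_pow2 zero_le_numeral)
  then have "(of_int a)^2 = (2::real) * (of_int b)^2" using ab(2) by (simp add: field_simps)
  then have "(of_int (a^2) :: real) = of_int (2 * b^2)" by simp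
  then have e: "a^2 = 2 * b^2" by (simp only: of_int_eq_iff)
  then have "even (a^2)" by simp
  then have "even a" by simp
  then obtain c where c: "a = 2 * c" by blast
  then have "b^2 = 2 * c^2" using e by (simp add: power2_eq_square)
  then have "even (b^2)" by simp
  then have "even b" by simp
  then show False using \<open>even a\<close> ab(3) by (metis coprime_common_divisor odd_one)
qed

lemma exp_shift_int':
  assumes "y = of_int m + x"
  shows "exp (\<i> * of_real (2 * pi * y)) = exp (\<i> * of_real (2 * pi * x))"
  using exp_shift_int[of m x] assms by simp

lemma kron_seq:
  fixes a b c :: real and N d :: nat and j z :: int
  assumes indep: "\<And>u1 u2 u3 :: int. of_int u1 * a + of_int u2 * b + of_int u3 * c = 0 \<Longrightarrow> u1 = 0 \<and> u2 = 0 \<and> u3 = 0"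
    and dist: "a \<noteq> b" "a \<noteq> c" "b \<noteq> c" and sum: "a + b + c = real N" and N: "N > 0"
    and dz: "2 * int d * j = int N * (2 * z + 1)"
  shows "\<exists>s::nat \<Rightarrow> real. (\<lambda>n. exp (\<i> * of_real (s n * a))) \<longlonglongrightarrow> 1 \<and> (\<lambda>n. exp (\<i> * of_real (s n * b))) \<longlonglongrightarrow> 1
     \<and> (\<lambda>n. exp (\<i> * of_real (s n * c))) \<longlonglongrightarrow> 1 \<and> (\<lambda>n. exp (\<i> * of_real (s n * real d))) \<longlonglongrightarrow> -1"
proof -
  define \<theta> where "\<theta> i = (if i = 0 then a else if i = 1 then b else c) / real N" for i :: nat
  define \<alpha> where "\<alpha> i = (if i = 0 then of_int j / real N else 0)" for i :: nat
  have Npos: "real N > 0" using N by simp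
  have three: "{..<3::nat} = {0,1,2}" by auto
  have inj: "inj_on \<theta> {..<3}"
    unfolding three inj_on_def
  proof (intro ballI impI)
    fix x y :: nat assume "x \<in> {0,1,2}" "y \<in> {0,1,2}" "\<theta> x = \<theta> y"
    then show "x = y" using dist Npos by (auto simp: \<theta>_def divide_cancel_right)
  qed
  interpret M: Modules.module "(\<lambda>r. (*) (real_of_int r))"
    by (simp add: Modules.module.intro distrib_left mult.commute)
  have ind: "M.independent (\<theta> ` {..<3})"
    unfolding M.independent_explicit_module
  proof (intro allI impI)
    fix t u v
    assume t: "finite t" "t \<subseteq> \<theta> ` {..<3}" and s0: "(\<Sum>v\<in>t. real_of_int (u v) * v) = 0" and v: "v \<in> t"
    define U where "U i = (if \<theta> i \<in> t then u (\<theta> i) else 0)" for i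
    have "(\<Sum>i\<in>{0,1,2::nat}. real_of_int (U i) * \<theta> i) = (\<Sum>i\<in>{0,1,2::nat}. if \<theta> i \<in> t then real_of_int (u (\<theta> i)) * \<theta> i else 0)"
      by (rule sum.cong) (auto simp: U_def)
    also have "\<dots> = (\<Sum>i\<in>{i\<in>{0,1,2}. \<theta> i \<in> t}. real_of_int (u (\<theta> i)) * \<theta> i)"
      by (rule sum.inter_filter[symmetric]) simp
    also have inj2: "inj_on \<theta> {i\<in>{0,1,2::nat}. \<theta> i \<in> t}" by (rule inj_on_subset[OF inj]) auto
    have "(\<Sum>i\<in>{i\<in>{0,1,2::nat}. \<theta> i \<in> t}. real_of_int (u (\<theta> i)) * \<theta> i) = (\<Sum>w\<in>\<theta> ` {i\<in>{0,1,2}. \<theta> i \<in> t}. real_of_int (u w) * w)"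
      using sum.reindex[OF inj2, of "\<lambda>w. real_of_int (u w) * w"] by (simp add: comp_def)
    also have "\<theta> ` {i\<in>{0,1,2}. \<theta> i \<in> t} = t"
    proof
      show "\<theta> ` {i\<in>{0,1,2}. \<theta> i \<in> t} \<subseteq> t" by blast
      show "t \<subseteq> \<theta> ` {i\<in>{0,1,2}. \<theta> i \<in> t}"
      proof
        fix w assume w: "w \<in> t"
        then obtain i where "i < 3" "w = \<theta> i" using t(2) by blast
        then show "w \<in> \<theta> ` {i\<in>{0,1,2}. \<theta> i \<in> t}" using w three by blast
      qed
    qed
    finally have "(\<Sum>i\<in>{0,1,2::nat}. real_of_int (U i) * \<theta> i) = 0" using s0 by simp
    moreover have "(\<Sum>i\<in>{0,1,2::nat}. real_of_int (U i) * \<theta> i) = real_of_int (U 0) * \<theta> 0 + real_of_int (U 1) * \<theta> 1 + real_of_int (U 2) * \<theta> 2"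
      by simp
    ultimately have "(of_int (U 0) * a + of_int (U 1) * b + of_int (U 2) * c) / real N = 0"
      by (simp add: \<theta>_def add_divide_distrib)
    then have "of_int (U 0) * a + of_int (U 1) * b + of_int (U 2) * c = 0" using Npos by simp
    then have U0: "U 0 = 0" "U 1 = 0" "U 2 = 0" using indep by blast+
    obtain i where i: "i \<in> {0,1,2}" "v = \<theta> i" using v t(2) three by auto
    show "u v = 0" using U0 i v by (auto simp: U_def)
  qed
  have ex: "\<forall>n. \<exists>p :: real \<times> (nat \<Rightarrow> int). \<forall>i<3. \<bar>fst p * \<theta> i - of_int (snd p i) - \<alpha> i\<bar> < 1 / real (Suc n)"
  proof
    fix n
    obtain t h where "\<And>i. i < 3 \<Longrightarrow> \<bar>t * \<theta> i - of_int (h i) - \<alpha> i\<bar> < 1 / real (Suc n)"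
      by (rule Kronecker_thm_1[OF ind inj, of "1 / real (Suc n)" \<alpha>]) auto
    then show "\<exists>p :: real \<times> (nat \<Rightarrow> int). \<forall>i<3. \<bar>fst p * \<theta> i - of_int (snd p i) - \<alpha> i\<bar> < 1 / real (Suc n)"
      by (intro exI[of _ "(t, h)"]) simp
  qed
  obtain f where f: "\<forall>n. \<forall>i<3. \<bar>fst (f n) * \<theta> i - of_int (snd (f n) i) - \<alpha> i\<bar> < 1 / real (Suc n)"
    using choice[OF ex] by blast
  define T where "T n = fst (f n)" for n
  define H where "H n = snd (f n)" for n
  have TH: "\<bar>T n * \<theta> i - of_int (H n i) - \<alpha> i\<bar> < 1 / real (Suc n)" if "i < 3" for n i
    using f that by (simp add: T_def H_def)
  define \<delta> where "\<delta> i n = T n * \<theta> i - of_int (H n i) - \<alpha> i" for i n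
  have \<delta>b: "\<bar>\<delta> i n\<bar> \<le> 1 / real (Suc n)" if "i < 3" for i n
    using TH[OF that, of n] by (simp add: \<delta>_def)
  define s where "s n = 2 * pi * T n" for n
  have Tth: "T n * (if i = 0 then a else if i = 1 then b else c) = real N * (of_int (H n i) + \<alpha> i + \<delta> i n)" for n and i :: nat
    using Npos by (simp add: \<delta>_def \<theta>_def)
  have root: "(\<lambda>n. exp (\<i> * of_real (s n * x))) \<longlonglongrightarrow> 1"
    if i: "i < 3" and x: "x = (if i = 0 then a else if i = 1 then b else c)" for i :: nat and x
  proof -
    have e: "exp (\<i> * of_real (s n * x)) = exp (\<i> * of_real (2 * pi * (real N * \<delta> i n)))" for n
    proof -
      have "s n * x = 2 * pi * (real N * (of_int (H n i) + \<alpha> i + \<delta> i n))"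
        unfolding s_def x using Tth[of n i] by simp
      also have "\<dots> = 2 * pi * (of_int (int N * H n i + (if i = 0 then j else 0)) + real N * \<delta> i n)"
        using Npos by (auto simp: \<alpha>_def algebra_simps)
      finally show ?thesis by (simp only: exp_shift_int)
    qed
    have "(\<lambda>n. exp (\<i> * of_real (2 * pi * (real N * \<delta> i n)))) \<longlonglongrightarrow> 1"
    proof (rule tendsto_exp_small[where C = "real N"])
      fix n
      have "\<bar>real N * \<delta> i n\<bar> = real N * \<bar>\<delta> i n\<bar>" by (simp add: abs_mult)
      also have "\<dots> \<le> real N * (1 / real (Suc n))" using \<delta>b[OF i(1)] by (intro mult_left_mono) auto
      finally show "\<bar>real N * \<delta> i n\<bar> \<le> real N / real (Suc n)" by simp
    qed
    then show ?thesis unfolding e .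
  qed
  have rd: "(\<lambda>n. exp (\<i> * of_real (s n * real d))) \<longlonglongrightarrow> -1"
  proof -
    define \<Delta> where "\<Delta> n = \<delta> 0 n + \<delta> 1 n + \<delta> 2 n" for n
    have th1: "\<theta> 0 + \<theta> 1 + \<theta> 2 = 1" using sum Npos by (simp add: \<theta>_def add_divide_distrib[symmetric])
    have dj: "real d * of_int j / real N = of_int z + 1/2"
    proof -
      have "real_of_int (2 * int d * j) = real_of_int (int N * (2 * z + 1))" using dz by simp
      then have "2 * real d * of_int j = real N * (2 * of_int z + 1)" by simp
      then show ?thesis using Npos by (simp add: field_simps)
    qed
    have e: "exp (\<i> * of_real (s n * real d)) = - exp (\<i> * of_real (2 * pi * (real d * \<Delta> n)))" for n
    proof -
      have Tn: "T n = T n * \<theta> 0 + T n * \<theta> 1 + T n * \<theta> 2" using th1 by (simp add: distrib_left[symmetric])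
      have "T n * \<theta> i = of_int (H n i) + \<alpha> i + \<delta> i n" for i by (simp add: \<delta>_def)
      then have "T n = of_int (H n 0 + H n 1 + H n 2) + of_int j / real N + \<Delta> n"
        using Tn by (simp add: \<Delta>_def \<alpha>_def)
      then have "s n * real d = 2 * pi * (real d * of_int (H n 0 + H n 1 + H n 2) + real d * of_int j / real N + real d * \<Delta> n)"
        by (simp add: s_def algebra_simps)
      also have "\<dots> = 2 * pi * (of_int (int d * (H n 0 + H n 1 + H n 2) + z) + (1/2 + real d * \<Delta> n))"
        unfolding dj by (simp add: algebra_simps)
      finally show ?thesis by (simp only: exp_shift_int exp_half)
    qed
    have "(\<lambda>n. exp (\<i> * of_real (2 * pi * (real d * \<Delta> n)))) \<longlonglongrightarrow> 1"
    proof (rule tendsto_exp_small[where C = "3 * real d"])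
      fix n
      have "\<bar>\<Delta> n\<bar> \<le> 3 / real (Suc n)"
        using \<delta>b[of 0 n] \<delta>b[of 1 n] \<delta>b[of 2 n] unfolding \<Delta>_def by simp
      then have "real d * \<bar>\<Delta> n\<bar> \<le> real d * (3 / real (Suc n))" by (intro mult_left_mono) auto
      then show "\<bar>real d * \<Delta> n\<bar> \<le> 3 * real d / real (Suc n)" by (simp add: abs_mult mult.commute)
    qed
    then have "(\<lambda>n. - exp (\<i> * of_real (2 * pi * (real d * \<Delta> n)))) \<longlonglongrightarrow> - 1"
      by (intro tendsto_minus)
    then show ?thesis unfolding e .
  qed
  show ?thesis
    using root[of 0 a] root[of 1 b] root[of 2 c] rd by (intro exI[of _ s]) simp
qed

lemma kron_sqrt2:
  "\<exists>s::nat \<Rightarrow> real. (\<lambda>n. exp (\<i> * of_real (s n * 1))) \<longlonglongrightarrow> -1 \<and> (\<lambda>n. exp (\<i> * of_real (s n * 2))) \<longlonglongrightarrow> 1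
     \<and> (\<lambda>n. exp (\<i> * of_real (s n * (2 + sqrt 2)))) \<longlonglongrightarrow> 1 \<and> (\<lambda>n. exp (\<i> * of_real (s n * (2 - sqrt 2)))) \<longlonglongrightarrow> 1"
proof -
  have ex: "\<forall>n. \<exists>p :: int \<times> int. \<bar>of_int (fst p) * sqrt 2 - of_int (snd p) - (- sqrt 2 / 2)\<bar> < 1 / real (Suc n)"
  proof
    fix n
    obtain h k where "k > 0" "\<bar>of_int k * sqrt 2 - of_int h - (- sqrt 2 / 2)\<bar> < 1 / real (Suc n)"
      by (rule sequence_of_fractional_parts_is_dense[OF sqrt2_irrat, where \<epsilon>="1 / real (Suc n)" and \<alpha>="- sqrt 2 / 2"]) auto
    then show "\<exists>p :: int \<times> int. \<bar>of_int (fst p) * sqrt 2 - of_int (snd p) - (- sqrt 2 / 2)\<bar> < 1 / real (Suc n)"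
      by (intro exI[of _ "(k, h)"]) simp
  qed
  obtain f where f: "\<forall>n. \<bar>of_int (fst (f n)) * sqrt 2 - of_int (snd (f n)) - (- sqrt 2 / 2)\<bar> < 1 / real (Suc n)"
    using choice[OF ex] by blast
  define K where "K n = fst (f n)" for n
  define H where "H n = snd (f n)" for n
  define \<delta> where "\<delta> n = of_int (K n) * sqrt 2 - of_int (H n) + sqrt 2 / 2" for n
  have \<delta>b: "\<bar>\<delta> n\<bar> \<le> 1 / real (Suc n)" for n
    using f[rule_format, of n] by (simp add: \<delta>_def K_def H_def)
  define s where "s n = 2 * pi * (of_int (K n) + 1/2)" for n
  have e1: "exp (\<i> * of_real (s n * 1)) = -1" for n
  proof -
    have "s n * 1 = 2 * pi * (of_int (K n) + (1/2 + 0))" by (simp add: s_def)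
    then show ?thesis by (simp only: exp_shift_int exp_half) simp
  qed
  have e2: "exp (\<i> * of_real (s n * 2)) = 1" for n
  proof -
    have "s n * 2 = 2 * pi * (of_int (2 * K n + 1) + 0)" by (simp add: s_def algebra_simps)
    then show ?thesis by (simp only: exp_shift_int) simp
  qed
  have e3: "exp (\<i> * of_real (s n * (2 + sqrt 2))) = exp (\<i> * of_real (2 * pi * \<delta> n))" for n
  proof -
    have "s n * (2 + sqrt 2) = 2 * pi * (of_int (2 * K n + 1 + H n) + \<delta> n)"
      by (simp add: s_def \<delta>_def algebra_simps)
    then show ?thesis by (simp only: exp_shift_int)
  qed
  have e4: "exp (\<i> * of_real (s n * (2 - sqrt 2))) = exp (\<i> * of_real (2 * pi * (- \<delta> n)))" for n
  proof -
    have "s n * (2 - sqrt 2) = 2 * pi * (of_int (2 * K n + 1 - H n) + (- \<delta> n))"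
      by (simp add: s_def \<delta>_def algebra_simps)
    then show ?thesis by (simp only: exp_shift_int)
  qed
  have l3: "(\<lambda>n. exp (\<i> * of_real (2 * pi * \<delta> n))) \<longlonglongrightarrow> 1"
    by (rule tendsto_exp_small[where C=1]) (use \<delta>b in simp)
  have l4: "(\<lambda>n. exp (\<i> * of_real (2 * pi * (- \<delta> n)))) \<longlonglongrightarrow> 1"
    by (rule tendsto_exp_small[where C=1]) (use \<delta>b in simp)
  show ?thesis
    by (intro exI[of _ s] conjI) (simp_all only: e1 e2 e3 e4 l3 l4 tendsto_const)
qed

definition pt :: "nat \<Rightarrow> nat \<Rightarrow> complex \<Rightarrow> nat \<Rightarrow> complex" where
  "pt k l \<theta> i = (if i = 0 then 1 - \<theta> else if i = 1 then \<theta>^2 - (of_nat k + 2) * \<theta> + 1 else if i = 2 then 1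
     else ((of_nat l + 1 - \<theta>) * (\<theta>^2 - (of_nat k + 2) * \<theta> + 1) - (1 - \<theta>)) / of_nat l)"

lemma pt_id: "(1 - \<theta>) * ((of_nat l + 1 - \<theta>) * (\<theta>^2 - (of_nat k + 2) * \<theta> + 1) - (1 - \<theta>))
   - of_nat l * (\<theta>^2 - (of_nat k + 2) * \<theta> + 1) = \<theta> * pg k l (\<theta>::complex)"
  by (simp add: pg_def algebra_simps power2_eq_square power3_eq_cube)

lemma pg_complex: "pg k l (complex_of_real x) = complex_of_real (pg k l x)"
  by (simp add: pg_def)

lemma pt_eig:
  assumes "l \<ge> 1" "pg k l (\<theta>r::real) = 0"
  shows "Qt k l (pt k l (of_real \<theta>r)) = (\<lambda>i. of_real \<theta>r * pt k l (of_real \<theta>r) i)"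
proof (rule ext)
  fix i
  define \<theta> where "\<theta> = complex_of_real \<theta>r"
  define q where "q = \<theta>^2 - (of_nat k + 2) * \<theta> + 1"
  define Y where "Y = ((of_nat l + 1 - \<theta>) * q - (1 - \<theta>)) / of_nat l"
  have l0: "(of_nat l :: complex) \<noteq> 0" using assms by simp
  have p0: "pg k l \<theta> = 0" using assms by (simp add: \<theta>_def pg_complex)
  have Y3: "Y - q = \<theta> * Y"
  proof -
    have "(1 - \<theta>) * ((of_nat l + 1 - \<theta>) * q - (1 - \<theta>)) - of_nat l * q = 0"
      using pt_id[of \<theta> l k] p0 by (simp add: q_def)
    then have "(1 - \<theta>) * (of_nat l * Y) = of_nat l * q" using l0 by (simp add: Y_def)
    then have "of_nat l * ((1 - \<theta>) * Y) = of_nat l * q" by (simp add: algebra_simps)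
    then have "(1 - \<theta>) * Y = q" using l0 by simp
    then show ?thesis by (simp add: algebra_simps)
  qed
  have ptv: "pt k l \<theta> = (\<lambda>i. if i = 0 then 1 - \<theta> else if i = 1 then q else if i = 2 then 1 else Y)"
    by (rule ext) (simp add: pt_def q_def Y_def)
  have lY: "of_nat l * Y = (of_nat l + 1 - \<theta>) * q - (1 - \<theta>)" using l0 by (simp add: Y_def)
  have Y1: "(of_nat l + 1) * q - (1 - \<theta>) - of_nat l * Y = \<theta> * q"
    unfolding lY by (simp add: algebra_simps)
  show "Qt k l (pt k l (of_real \<theta>r)) i = of_real \<theta>r * pt k l (of_real \<theta>r) i"
    unfolding \<theta>_def[symmetric] ptv using Y3 Y1
    by (auto simp: Qt_def q_def algebra_simps power2_eq_square)
qed

lemma pt_vals: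
  assumes "l \<ge> 1" "pg k l (\<theta>r::real) = 0" "\<theta>r \<noteq> 1"
  shows "pt k l (of_real \<theta>r) 0 \<noteq> 0" "pt k l (of_real \<theta>r) 3 \<noteq> 0"
proof -
  define \<theta> where "\<theta> = complex_of_real \<theta>r"
  have t1: "\<theta> \<noteq> 1" using assms by (simp add: \<theta>_def)
  show "pt k l (of_real \<theta>r) 0 \<noteq> 0" using t1 by (simp add: pt_def \<theta>_def[symmetric])
  define q where "q = \<theta>^2 - (of_nat k + 2) * \<theta> + 1"
  define Y where "Y = ((of_nat l + 1 - \<theta>) * q - (1 - \<theta>)) / of_nat l"
  have l0: "(of_nat l :: complex) \<noteq> 0" using assms by simp
  have p0: "pg k l \<theta> = 0" using assms by (simp add: \<theta>_def pg_complex)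
  have "(1 - \<theta>) * ((of_nat l + 1 - \<theta>) * q - (1 - \<theta>)) - of_nat l * q = 0"
    using pt_id[of \<theta> l k] p0 by (simp add: q_def)
  then have YY: "(1 - \<theta>) * Y = q" using l0 unfolding Y_def
    by (simp add: field_simps)
  have "Y \<noteq> 0"
  proof
    assume "Y = 0"
    then have "q = 0" using YY by simp
    then have "Y = - (1 - \<theta>) / of_nat l" by (simp add: Y_def)
    then show False using \<open>Y = 0\<close> t1 l0 by simp
  qed
  then show "pt k l (of_real \<theta>r) 3 \<noteq> 0" by (simp add: pt_def Y_def q_def \<theta>_def[symmetric])
qed

lemma root_eigvec:
  assumes "l \<ge> 1" "pg k l (\<theta>r::real) = 0"
  shows "\<forall>x\<in>DV k l. Lop (DV k l) (DA k l) (cv4 k (pt k l (of_real \<theta>r))) x = of_real \<theta>r * cv4 k (pt k l (of_real \<theta>r)) x"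
  using Lop_cv4_eig[OF pt_eig[OF assms] assms(1)] by blast

lemma cv4_at0: "cv4 k t 0 = t 0" by (simp add: cv4_def cidx_def)
lemma cv4_atw: "k + 2 \<le> w \<Longrightarrow> cv4 k t w = t 3" by (simp add: cv4_def cidx_def)

lemma psi1_eig:
  assumes "l \<ge> 2" "k + 2 \<le> w" "w \<le> k + l + 1"
  shows "\<forall>x\<in>DV k l. Lop (DV k l) (DA k l) (cv k w 0 0 0 (1 - 1 / of_nat l) (- 1 / of_nat l)) x
           = of_real 1 * cv k w 0 0 0 (1 - 1 / of_nat l) (- 1 / of_nat l) x"
proof
  fix x assume x: "x \<in> DV k l"
  have l0: "(of_nat l :: complex) \<noteq> 0" using assms by simp
  have "(of_nat (l - 1) :: complex) = of_nat l - 1" using assms by (simp add: of_nat_diff)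
  then have B: "(of_nat l + 1) * 0 - 0 - (1 - 1 / of_nat l) - of_nat (l - 1) * (- 1 / of_nat l) = (0::complex)"
    using l0 by (simp add: field_simps)
  show "Lop (DV k l) (DA k l) (cv k w 0 0 0 (1 - 1 / of_nat l) (- 1 / of_nat l)) x
           = of_real 1 * cv k w 0 0 0 (1 - 1 / of_nat l) (- 1 / of_nat l) x"
    unfolding Lop_cv[OF x assms(2,3)] B by (simp add: cv_def)
qed

lemma lbv_eig_roots:
  assumes "y0+y1+y2+y3 = of_nat (k+l+4)"
    "y0*y1+y0*y2+y0*y3+y1*y2+y1*y3+y2*y3 = of_nat (k*l+2*k+2*l+5)"
    "y0*y1*y2+y0*y1*y3+y0*y2*y3+y1*y2*y3 = of_nat (k+l+2)" "y0*y1*y2*y3 = 0"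
  shows "Qt k l (lbv k l t y0 y1 y2 y3) = (\<lambda>i. y0 * lbv k l t y0 y1 y2 y3 i)"
  by (rule lbv_eig) (use CH[of k l t] assms in simp)

lemma pgst_from_roots:
  fixes a b c :: real and v :: nat and t :: "nat \<Rightarrow> complex" and s :: "nat \<Rightarrow> real"
  assumes kl: "k \<ge> 1" "l \<ge> 1" and v: "v \<in> DV k l"
    and r: "pg k l a = 0" "pg k l b = 0" "pg k l c = 0" and d: "a \<noteq> b" "a \<noteq> c" "b \<noteq> c"
    and tv: "\<And>x. x \<in> DV k l \<Longrightarrow> cv4 k t x = (if x = v then 1 else 0)"
    and la: "(\<lambda>n. exp (\<i> * of_real (s n * a))) \<longlonglongrightarrow> 1"
    and lb: "(\<lambda>n. exp (\<i> * of_real (s n * b))) \<longlonglongrightarrow> 1"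
    and lc: "(\<lambda>n. exp (\<i> * of_real (s n * c))) \<longlonglongrightarrow> 1"
    and ld: "(\<lambda>n. exp (\<i> * of_real (s n * real (degree (DV k l) (DA k l) v)))) \<longlonglongrightarrow> -1"
  shows "laplacian_pgst (BV k l) (BA k l) (0, v) (1, v)"
proof -
  note V = vieta[OF r d]
  define A where "A = complex_of_real a"
  define B where "B = complex_of_real b"
  define C where "C = complex_of_real c"
  have V1: "A + B + C = of_nat (k+l+4)" using V(1) unfolding A_def B_def C_def
    by (metis of_real_add of_real_of_nat_eq)
  have V2: "A*B + A*C + B*C = of_nat (k*l+2*k+2*l+5)" using V(2) unfolding A_def B_def C_def
    by (metis of_real_add of_real_mult of_real_of_nat_eq)
  have V3: "A*B*C = of_nat (k+l+2)" using V(3) unfolding A_def B_def C_def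
    by (metis of_real_mult of_real_of_nat_eq)
  have nz: "a \<noteq> 0" "b \<noteq> 0" "c \<noteq> 0" using r by (auto simp: pg_0)
  have D: "0 \<noteq> A" "0 \<noteq> B" "0 \<noteq> C" "A \<noteq> B" "A \<noteq> C" "B \<noteq> C"
    using nz d by (auto simp: A_def B_def C_def)
  define ys :: "nat \<Rightarrow> real" where "ys j = (if j = 0 then 0 else if j = 1 then a else if j = 2 then b else c)" for j
  define \<Phi> :: "nat \<Rightarrow> nat \<Rightarrow> complex" where "\<Phi> j = (if j = 0 then lbv k l t 0 A B C else if j = 1 then lbv k l t A 0 B C
      else if j = 2 then lbv k l t B 0 A C else lbv k l t C 0 A B)" for j
  have e0: "Qt k l (lbv k l t 0 A B C) = (\<lambda>i. 0 * lbv k l t 0 A B C i)"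
    by (rule lbv_eig_roots) (use V1 V2 V3 in \<open>simp_all add: algebra_simps\<close>)
  have e1: "Qt k l (lbv k l t A 0 B C) = (\<lambda>i. A * lbv k l t A 0 B C i)"
    by (rule lbv_eig_roots) (use V1 V2 V3 in \<open>simp_all add: algebra_simps\<close>)
  have e2: "Qt k l (lbv k l t B 0 A C) = (\<lambda>i. B * lbv k l t B 0 A C i)"
    by (rule lbv_eig_roots) (use V1 V2 V3 in \<open>simp_all add: algebra_simps\<close>)
  have e3: "Qt k l (lbv k l t C 0 A B) = (\<lambda>i. C * lbv k l t C 0 A B i)"
    by (rule lbv_eig_roots) (use V1 V2 V3 in \<open>simp_all add: algebra_simps\<close>)
  have qe: "Qt k l (\<Phi> j) = (\<lambda>i. of_real (ys j) * \<Phi> j i)" if "j \<in> {0,1,2,3}" for j :: nat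
  proof -
    have "j = 0 \<or> j = 1 \<or> j = 2 \<or> j = 3" using that by auto
    then show ?thesis
    proof (elim disjE)
      assume "j = 0" then show ?thesis unfolding \<Phi>_def ys_def using e0 by simp
    next
      assume "j = 1" then show ?thesis unfolding \<Phi>_def ys_def using e1 by (simp add: A_def)
    next
      assume "j = 2" then show ?thesis unfolding \<Phi>_def ys_def using e2 by (simp add: B_def)
    next
      assume "j = 3" then show ?thesis unfolding \<Phi>_def ys_def using e3 by (simp add: C_def)
    qed
  qed
  show ?thesis
  proof (rule pgst_if[OF v, where J="{0,1,2,3::nat}" and h="\<lambda>j. cv4 k (\<Phi> j)" and \<theta>=ys and s=s])
    show "finite {0,1,2,3::nat}" by simp
  next
    fix j x assume j: "j \<in> {0,1,2,3::nat}" and x: "x \<in> DV k l"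
    show "Lop (DV k l) (DA k l) (cv4 k (\<Phi> j)) x = of_real (ys j) * cv4 k (\<Phi> j) x"
      by (rule Lop_cv4_eig[OF qe[OF j] kl(2) x])
  next
    fix x assume x: "x \<in> DV k l"
    have "(\<Sum>j\<in>{0,1,2,3::nat}. cv4 k (\<Phi> j) x) = \<Phi> 0 (cidx k x) + \<Phi> 1 (cidx k x) + \<Phi> 2 (cidx k x) + \<Phi> 3 (cidx k x)"
      by (simp add: cv4_def)
    also have "\<dots> = t (cidx k x)" unfolding \<Phi>_def using lbv_sum[OF D] by simp
    also have "\<dots> = (if x = v then 1 else 0)" using tv[OF x] by (simp add: cv4_def)
    finally show "(if x = v then 1 else 0) = (\<Sum>j\<in>{0,1,2,3::nat}. cv4 k (\<Phi> j) x)" by simp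
  next
    fix j assume "j \<in> {0,1,2,3::nat}"
    then show "(\<lambda>n. exp (\<i> * of_real (s n * ys j))) \<longlonglongrightarrow> 1"
      using la lb lc by (auto simp: ys_def)
  next
    show "(\<lambda>n. exp (\<i> * of_real (s n * real (degree (DV k l) (DA k l) v)))) \<longlonglongrightarrow> -1" by (rule ld)
  qed
qed

lemma roots3:
  assumes "k \<ge> 1" "l \<ge> 1"
  obtains a b c :: real where "pg k l a = 0" "pg k l b = 0" "pg k l c = 0" "a \<noteq> b" "a \<noteq> c" "b \<noteq> c"
    "a \<noteq> 1" "b \<noteq> 1" "c \<noteq> 1"
proof -
  obtain a b c :: real where r: "a < b" "b < c" "pg k l a = 0" "pg k l b = 0" "pg k l c = 0"
    using pg_roots[OF assms] by blast
  have "pg k l (1::real) \<noteq> 0" using assms by (simp add: pg_1)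
  then show ?thesis using r that by force
qed

lemma exp_sum3:
  "exp (\<i> * of_real (s * (a + b + c))) = exp (\<i> * of_real (s * a)) * exp (\<i> * of_real (s * b)) * exp (\<i> * of_real (s * c))"
  by (simp add: distrib_left exp_add[symmetric] algebra_simps)

lemma exp_pow_nat:
  "exp (\<i> * of_real (s * (x * real m))) = exp (\<i> * of_real (s * x)) ^ m"
proof -
  have "\<i> * of_real (s * (x * real m)) = of_nat m * (\<i> * of_real (s * x))" by (simp add: algebra_simps)
  then show ?thesis by (simp only: exp_of_nat_mult)
qed

lemma deg0: "degree (DV k l) (DA k l) 0 = k + 1"
  using dstar_degree[of 0 k l] by (simp add: dstar_V_def)

lemma degw: "k + 2 \<le> w \<Longrightarrow> w \<le> k + l + 1 \<Longrightarrow> degree (DV k l) (DA k l) w = 1"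
  using dstar_degree[of w k l] by (simp add: dstar_V_def)

lemma part1_onlyif:
  assumes kl: "k \<ge> 1" "l \<ge> 1" and pg: "laplacian_pgst (BV k l) (BA k l) (0, 0) (1, 0)"
  shows "k \<noteq> l \<and> multiplicity (2::nat) (k + 1) = multiplicity (2::nat) (l + 3)"
proof -
  have v: "0 \<in> DV k l" by (simp add: dstar_V_def)
  obtain s where L1: "(\<lambda>j. exp (\<i> * of_real (s j * real (k + 1)))) \<longlonglongrightarrow> -1"
    and E: "\<And>h \<theta>. (\<forall>x\<in>DV k l. Lop (DV k l) (DA k l) h x = of_real \<theta> * h x) \<Longrightarrow> h 0 \<noteq> 0 \<Longrightarrow>
          (\<lambda>j. exp (\<i> * of_real (s j * \<theta>))) \<longlonglongrightarrow> 1"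
    using pgst_onlyif[OF pg v] unfolding deg0 by blast
  have rootlim: "(\<lambda>j. exp (\<i> * of_real (s j * \<theta>))) \<longlonglongrightarrow> 1" if "pg k l \<theta> = 0" "\<theta> \<noteq> 1" for \<theta>
    using E[OF root_eigvec[OF kl(2) that(1)]] pt_vals[OF kl(2) that] by (simp add: cv4_at0)
  have kl_ne: "k \<noteq> l"
  proof
    assume "k = l"
    then have "pg k l (real k + 1) = 0" by (simp add: pg_kk)
    moreover have "real k + 1 \<noteq> 1" using kl by simp
    ultimately have "(\<lambda>j. exp (\<i> * of_real (s j * (real k + 1)))) \<longlonglongrightarrow> 1" by (rule rootlim)
    moreover have "(\<lambda>j. exp (\<i> * of_real (s j * (real k + 1)))) \<longlonglongrightarrow> -1" using L1 by (simp add: add.commute)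
    ultimately have "(1::complex) = -1" by (rule LIMSEQ_unique)
    then show False by simp
  qed
  have nu: "multiplicity (2::nat) (k + 1) = multiplicity (2::nat) (l + 3)"
  proof (rule ccontr)
    assume ne: "multiplicity (2::nat) (k + 1) \<noteq> multiplicity (2::nat) (l + 3)"
    have "\<exists>x y :: nat. odd y \<and> x * ((k + 1) + (l + 3)) = y * (k + 1)"
      by (rule nu2_neq) (use ne in simp_all)
    then obtain x y :: nat where xy: "odd y" "x * ((k + 1) + (l + 3)) = y * (k + 1)"
      by blast
    obtain a b c :: real where r: "pg k l a = 0" "pg k l b = 0" "pg k l c = 0" "a \<noteq> b" "a \<noteq> c" "b \<noteq> c"
      "a \<noteq> 1" "b \<noteq> 1" "c \<noteq> 1" by (rule roots3[OF kl])
    have sum: "a + b + c = real (k + l + 4)" using vieta(1)[OF r(1-6)] .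
    have "(\<lambda>j. exp (\<i> * of_real (s j * a)) * exp (\<i> * of_real (s j * b)) * exp (\<i> * of_real (s j * c))) \<longlonglongrightarrow> 1 * 1 * 1"
      by (intro tendsto_mult rootlim r)
    then have "(\<lambda>j. exp (\<i> * of_real (s j * real (k + l + 4)))) \<longlonglongrightarrow> 1"
      unfolding sum[symmetric] exp_sum3 by simp
    then have "(\<lambda>j. exp (\<i> * of_real (s j * real (k + l + 4))) ^ x) \<longlonglongrightarrow> 1 ^ x"
      by (intro tendsto_power)
    then have A1: "(\<lambda>j. exp (\<i> * of_real (s j * (real (k + l + 4) * real x)))) \<longlonglongrightarrow> 1"
      unfolding exp_pow_nat by simp
    have "(\<lambda>j. exp (\<i> * of_real (s j * real (k + 1))) ^ y) \<longlonglongrightarrow> (-1) ^ y"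
      by (intro tendsto_power L1)
    then have A2: "(\<lambda>j. exp (\<i> * of_real (s j * (real (k + 1) * real y)))) \<longlonglongrightarrow> -1"
      unfolding exp_pow_nat using xy(1) by simp
    have "x * (k + l + 4) = y * (k + 1)" using xy(2) by (simp add: ac_simps)
    then have "real (x * (k + l + 4)) = real (y * (k + 1))" by (simp only:)
    then have eqx: "real (k + l + 4) * real x = real (k + 1) * real y" by (simp only: of_nat_mult mult.commute)
    have A1': "(\<lambda>j. exp (\<i> * of_real (s j * (real (k + 1) * real y)))) \<longlonglongrightarrow> 1" using A1 unfolding eqx .
    have "(1::complex) = -1" by (rule LIMSEQ_unique[OF A1' A2])
    then show False by simp
  qed
  show ?thesis using kl_ne nu by blast
qed

lemma indep_int:
  fixes a b c :: real
  assumes kl: "k \<ge> 1" "l \<ge> 1" and irr: "irreducible (dstar_p k l)"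
    and r: "pg k l a = 0" "pg k l b = 0" "pg k l c = 0" and d: "a \<noteq> b" "a \<noteq> c" "b \<noteq> c"
  shows "\<And>u1 u2 u3 :: int. of_int u1 * a + of_int u2 * b + of_int u3 * c = 0 \<Longrightarrow> u1 = 0 \<and> u2 = 0 \<and> u3 = 0"
proof -
  fix u1 u2 u3 :: int
  assume rel: "of_int u1 * a + of_int u2 * b + of_int u3 * c = 0"
  have nrr: "\<And>x. x \<in> \<rat> \<Longrightarrow> pg k l x \<noteq> (0::real)"
    using norat irr_no_root[OF irr] by blast
  have "of_int u1 = (of_int u3 :: real) \<and> of_int u2 = (of_int u3 :: real)"
    by (rule indep_rel[OF nrr r d]) (use rel in simp_all)
  then have e: "u1 = u3" "u2 = u3" by simp_all
  have "of_int u3 * (a + b + c) = 0" using rel e by (simp add: algebra_simps)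
  then have "of_int u3 * real (k + l + 4) = 0" using vieta(1)[OF r d] by simp
  then have "u3 = 0" by simp
  then show "u1 = 0 \<and> u2 = 0 \<and> u3 = 0" using e by simp
qed

lemma part1_if:
  assumes kl: "k \<ge> 1" "l \<ge> 1" and irr: "irreducible (dstar_p k l)"
    and nu: "multiplicity (2::nat) (k + 1) = multiplicity (2::nat) (l + 3)"
  shows "laplacian_pgst (BV k l) (BA k l) (0, 0) (1, 0)"
proof -
  have v: "0 \<in> DV k l" by (simp add: dstar_V_def)
  obtain a b c :: real where r: "pg k l a = 0" "pg k l b = 0" "pg k l c = 0" "a \<noteq> b" "a \<noteq> c" "b \<noteq> c"
      "a \<noteq> 1" "b \<noteq> 1" "c \<noteq> 1" by (rule roots3[OF kl])
  have sum: "a + b + c = real (k + l + 4)" using vieta(1)[OF r(1-6)] .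
  have "\<exists>j z :: int. 2 * int (k + 1) * j = int ((k + 1) + (l + 3)) * (2 * z + 1)"
    by (rule nu2_eq) (use nu in simp_all)
  then obtain j z :: int where jz: "2 * int (k + 1) * j = int (k + l + 4) * (2 * z + 1)"
    by (auto simp: ac_simps)
  obtain s where s: "(\<lambda>n. exp (\<i> * of_real (s n * a))) \<longlonglongrightarrow> 1" "(\<lambda>n. exp (\<i> * of_real (s n * b))) \<longlonglongrightarrow> 1"
     "(\<lambda>n. exp (\<i> * of_real (s n * c))) \<longlonglongrightarrow> 1" "(\<lambda>n. exp (\<i> * of_real (s n * real (k + 1)))) \<longlonglongrightarrow> -1"
    using kron_seq[OF indep_int[OF kl irr r(1-6)] r(4-6) sum _ jz] by auto
  show ?thesis
  proof (rule pgst_from_roots[OF kl v r(1-6), where t="\<lambda>i. if i = 0 then 1 else 0" and s=s])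
    fix x assume "x \<in> DV k l"
    show "cv4 k (\<lambda>i. if i = 0 then 1 else 0) x = (if x = 0 then 1 else 0)"
      by (simp add: cv4_def cidx_def)
  qed (use s deg0 in auto)
qed

lemma part2_onlyif:
  assumes kl: "k \<ge> 1" "l \<ge> 1" and w: "k + 2 \<le> w" "w \<le> k + l + 1"
    and pg: "laplacian_pgst (BV k l) (BA k l) (0, w) (1, w)"
  shows "l = 1 \<and> odd k"
proof -
  have v: "w \<in> DV k l" using w by (simp add: dstar_V_def)
  obtain s where L1: "(\<lambda>j. exp (\<i> * of_real (s j * real 1))) \<longlonglongrightarrow> -1"
    and E: "\<And>h \<theta>. (\<forall>x\<in>DV k l. Lop (DV k l) (DA k l) h x = of_real \<theta> * h x) \<Longrightarrow> h w \<noteq> 0 \<Longrightarrow>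
          (\<lambda>j. exp (\<i> * of_real (s j * \<theta>))) \<longlonglongrightarrow> 1"
    using pgst_onlyif[OF pg v] unfolding degw[OF w] by blast
  have l1: "l = 1"
  proof (rule ccontr)
    assume "l \<noteq> 1"
    then have l2: "l \<ge> 2" using kl by simp
    have "cv k w 0 0 0 (1 - 1 / of_nat l) (- 1 / of_nat l) w \<noteq> 0"
      using w l2 by (simp add: cv_def)
    then have "(\<lambda>j. exp (\<i> * of_real (s j * 1))) \<longlonglongrightarrow> 1"
      using E[OF psi1_eig[OF l2 w]] by simp
    moreover have "(\<lambda>j. exp (\<i> * of_real (s j * 1))) \<longlonglongrightarrow> -1" using L1 by simp
    ultimately have "(1::complex) = -1" by (rule LIMSEQ_unique)
    then show False by simp
  qed
  have rootlim: "(\<lambda>j. exp (\<i> * of_real (s j * \<theta>))) \<longlonglongrightarrow> 1" if "pg k l \<theta> = 0" "\<theta> \<noteq> 1" for \<theta>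
    using E[OF root_eigvec[OF kl(2) that(1)]] pt_vals[OF kl(2) that] w by (simp add: cv4_atw)
  obtain a b c :: real where r: "pg k l a = 0" "pg k l b = 0" "pg k l c = 0" "a \<noteq> b" "a \<noteq> c" "b \<noteq> c"
      "a \<noteq> 1" "b \<noteq> 1" "c \<noteq> 1" by (rule roots3[OF kl])
  have sum: "a + b + c = real (k + l + 4)" using vieta(1)[OF r(1-6)] .
  have "(\<lambda>j. exp (\<i> * of_real (s j * a)) * exp (\<i> * of_real (s j * b)) * exp (\<i> * of_real (s j * c))) \<longlonglongrightarrow> 1 * 1 * 1"
    by (intro tendsto_mult rootlim r)
  then have A1: "(\<lambda>j. exp (\<i> * of_real (s j * real (k + l + 4)))) \<longlonglongrightarrow> 1"
    unfolding sum[symmetric] exp_sum3 by simp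
  have "(\<lambda>j. exp (\<i> * of_real (s j * real 1)) ^ (k + l + 4)) \<longlonglongrightarrow> (-1) ^ (k + l + 4)"
    by (intro tendsto_power L1)
  then have A2: "(\<lambda>j. exp (\<i> * of_real (s j * (real 1 * real (k + l + 4))))) \<longlonglongrightarrow> (-1) ^ (k + l + 4)"
    unfolding exp_pow_nat .
  have "(-1::complex) ^ (k + l + 4) = 1" using LIMSEQ_unique[OF A2] A1 by simp
  then have "even (k + l + 4)" by (metis neg_one_odd_power one_neq_neg_one)
  then have "odd k" using l1 by simp
  then show ?thesis using l1 by simp
qed

lemma part2_if:
  assumes kl: "k \<ge> 1" and l1: "l = 1" and ok: "odd k" and w: "k + 2 \<le> w" "w \<le> k + l + 1"
  shows "laplacian_pgst (BV k l) (BA k l) (0, w) (1, w)"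
proof -
  have kl2: "k \<ge> 1" "l \<ge> 1" using kl l1 by auto
  have wk: "w = k + 2" using w l1 by simp
  have v: "w \<in> DV k l" using w by (simp add: dstar_V_def)
  have tv: "cv4 k (\<lambda>i. if i = 3 then 1 else 0) x = (if x = w then 1 else 0)" if "x \<in> DV k l" for x
    using that wk l1 by (auto simp: cv4_def cidx_def dstar_V_def)
  show ?thesis
  proof (cases "k = 1")
    case False
    then have "k \<noteq> l" using l1 by simp
    then have irr: "irreducible (dstar_p k l)" using irr_iff[OF kl2] by simp
    obtain a b c :: real where r: "pg k l a = 0" "pg k l b = 0" "pg k l c = 0" "a \<noteq> b" "a \<noteq> c" "b \<noteq> c"
        "a \<noteq> 1" "b \<noteq> 1" "c \<noteq> 1" by (rule roots3[OF kl2])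
    have sum: "a + b + c = real (k + l + 4)" using vieta(1)[OF r(1-6)] .
    obtain m where m: "k + 5 = 2 * m" using ok by (metis evenE odd_add odd_numeral)
    have jz: "2 * int 1 * int m = int (k + l + 4) * (2 * 0 + 1)" using m l1 by simp
    obtain s where s: "(\<lambda>n. exp (\<i> * of_real (s n * a))) \<longlonglongrightarrow> 1" "(\<lambda>n. exp (\<i> * of_real (s n * b))) \<longlonglongrightarrow> 1"
       "(\<lambda>n. exp (\<i> * of_real (s n * c))) \<longlonglongrightarrow> 1" "(\<lambda>n. exp (\<i> * of_real (s n * real 1))) \<longlonglongrightarrow> -1"
      using kron_seq[OF indep_int[OF kl2 irr r(1-6)] r(4-6) sum _ jz] by auto
    show ?thesis
      by (rule pgst_from_roots[OF kl2 v r(1-6), where t="\<lambda>i. if i = 3 then 1 else 0" and s=s])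
         (use s tv degw[OF w] in auto)
  next
    case True
    have pk: "pg k l (x::real) = (x - 2) * ((x - 2)^2 - 2)" for x
      using True l1 pg_kk[of 1 x] by (simp add: power2_eq_square algebra_simps)
    have r: "pg k l (2 - sqrt 2) = 0" "pg k l (2::real) = 0" "pg k l (2 + sqrt 2) = 0"
      unfolding pk by simp_all
    have d: "2 - sqrt 2 \<noteq> 2" "2 - sqrt 2 \<noteq> 2 + sqrt 2" "(2::real) \<noteq> 2 + sqrt 2" by auto
    obtain s where s: "(\<lambda>n. exp (\<i> * of_real (s n * 1))) \<longlonglongrightarrow> -1" "(\<lambda>n. exp (\<i> * of_real (s n * 2))) \<longlonglongrightarrow> 1"
      "(\<lambda>n. exp (\<i> * of_real (s n * (2 + sqrt 2)))) \<longlonglongrightarrow> 1" "(\<lambda>n. exp (\<i> * of_real (s n * (2 - sqrt 2)))) \<longlonglongrightarrow> 1"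
      using kron_sqrt2 by blast
    show ?thesis
      by (rule pgst_from_roots[OF kl2 v r d, where t="\<lambda>i. if i = 3 then 1 else 0" and s=s])
         (use s tv degw[OF w] in auto)
  qed
qed

theorem theorem9:
  fixes k l :: nat
  assumes "k \<ge> 1" and "l \<ge> 1"
  shows "(laplacian_pgst (blowup2_V (dstar_V k l)) (blowup2_adj (dstar_adj k l)) (0, 0) (1, 0)
            \<longleftrightarrow> irreducible (dstar_p k l) \<and> multiplicity (2::nat) (k + 1) = multiplicity (2::nat) (l + 3))
       \<and> (\<forall>w. k + 2 \<le> w \<and> w \<le> k + l + 1 \<longrightarrow>
            (laplacian_pgst (blowup2_V (dstar_V k l)) (blowup2_adj (dstar_adj k l)) (0, w) (1, w)
             \<longleftrightarrow> l = 1 \<and> odd k \<and>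
                 (irreducible (dstar_p k l) \<or> (\<exists>m::int. even m \<and> poly (dstar_p k l) (of_int m) = 0))))"
proof (intro conjI allI impI)
  show "laplacian_pgst (blowup2_V (dstar_V k l)) (blowup2_adj (dstar_adj k l)) (0, 0) (1, 0)
            \<longleftrightarrow> irreducible (dstar_p k l) \<and> multiplicity (2::nat) (k + 1) = multiplicity (2::nat) (l + 3)"
    using part1_onlyif[OF assms] part1_if[OF assms] irr_iff[OF assms] by blast
next
  fix w assume w: "k + 2 \<le> w \<and> w \<le> k + l + 1"
  have root2: "l = 1 \<Longrightarrow> k = 1 \<Longrightarrow> \<exists>m::int. even m \<and> poly (dstar_p k l) (of_int m) = 0"
    by (intro exI[of _ 2]) (simp add: poly_dstar_p pg_def)
  show "laplacian_pgst (blowup2_V (dstar_V k l)) (blowup2_adj (dstar_adj k l)) (0, w) (1, w)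
             \<longleftrightarrow> l = 1 \<and> odd k \<and>
                 (irreducible (dstar_p k l) \<or> (\<exists>m::int. even m \<and> poly (dstar_p k l) (of_int m) = 0))"
  proof
    assume pg: "laplacian_pgst (blowup2_V (dstar_V k l)) (blowup2_adj (dstar_adj k l)) (0, w) (1, w)"
    have lk: "l = 1 \<and> odd k" using part2_onlyif[OF assms _ _ pg] w by blast
    show "l = 1 \<and> odd k \<and> (irreducible (dstar_p k l) \<or> (\<exists>m::int. even m \<and> poly (dstar_p k l) (of_int m) = 0))"
    proof (cases "k = l")
      case True
      then show ?thesis using lk root2 by simp
    next
      case False
      then show ?thesis using lk irr_iff[OF assms] by simp
    qed
  next
    assume "l = 1 \<and> odd k \<and> (irreducible (dstar_p k l) \<or> (\<exists>m::int. even m \<and> poly (dstar_p k l) (of_int m) = 0))"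
    then show "laplacian_pgst (blowup2_V (dstar_V k l)) (blowup2_adj (dstar_adj k l)) (0, w) (1, w)"
      using part2_if[OF assms(1)] w by blast
  qed
qed

end
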